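(* Let $G$ be a path graph with $L=\lambda_1+\lambda_2$ edges, rooted at a vertex $O$ that is not an endpoint: there are $\lambda_1\ge1$ edges on one side of $O$ and $\lambda_2\ge1$ on the other. Let all edges have activation probability $p\in(0,1]$. Let $\varepsilon^*$ be the hider's distribution that puts probability $\lambda_1/L$ on the extreme (leaf) edge of the first side and $\lambda_2/L$ on the extreme edge of the second side. Then every depth-first strategy of the searcher is a best response to $\varepsilon^*$. Hence $\varepsilon^*$ and the uniform depth-first strategy form a pair of optimal strategies.
   Context: Setting: the stochastic search game on $G$. Every edge has length $1$ and is active at each stage independently with probability $p$. The hider chooses an edge and stays there. The searcher starts at $O$; at each stage, knowing which edges are currently active, she waits or traverses an active edge incident to her position. The hider's payoff is the expected first time the searcher traverses his edge. View the path as a tree rooted at $O$ with edges oriented away from $O$. A depth-first strategy (DFS) acts as follows at the searcher's current vertex: - if some untraversed outgoing edge is active, traverse one of them (possibly chosen at random); - if all untraversed outgoing edges are inactive, wait; - if all outgoing edges have been traversed, traverse the edge back toward $O$ when active, and wait otherwise. The uniform DFS chooses uniformly among the active untraversed outgoing edges. *)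

theory Defs
  imports "HOL-Probability.Probability"
begin

(* Path graph with l1 edges on side 1 and l2 edges on side 2, root O = vertex 0.
   Vertices: integers -l2 .. l1.  Edge j (j \<noteq> 0) joins vertex j (its far end,
   away from O) and vertex near j = j - sgn j (its end towards O).
   Edges: 1..l1 on side 1 (leaf edge l1), -1..-l2 on side 2 (leaf edge -l2). *)

definition edges :: "nat \<Rightarrow> nat \<Rightarrow> int set" where
  "edges l1 l2 = {- int l2 .. int l1} - {0}"

definition near :: "int \<Rightarrow> int" where
  "near j = j - sgn j"

definition act :: "nat \<Rightarrow> nat \<Rightarrow> real \<Rightarrow> (int \<Rightarrow> bool) pmf" where
  "act l1 l2 p = Pi_pmf (edges l1 l2) False (\<lambda>_. bernoulli_pmf p)"

(* an action: None = wait, Some j = traverse edge j;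
   a history: list of (active set of the stage, action taken at the stage) *)
type_synonym hist = "((int \<Rightarrow> bool) \<times> int option) list"

(* behavioural (possibly randomised) searcher strategy: from the past history and
   the currently active edges, a distribution over actions *)
type_synonym strategy = "hist \<Rightarrow> (int \<Rightarrow> bool) \<Rightarrow> int option pmf"

definition step :: "int \<Rightarrow> int option \<Rightarrow> int" where
  "step v a = (case a of None \<Rightarrow> v | Some j \<Rightarrow> (if v = j then near j else j))"

definition pos :: "hist \<Rightarrow> int" where
  "pos h = fold (\<lambda>x v. step v (snd x)) h 0"

definition traversed :: "hist \<Rightarrow> int set" where
  "traversed h = {j. Some j \<in> snd ` set h}"

definition legal_acts :: "nat \<Rightarrow> nat \<Rightarrow> hist \<Rightarrow> (int \<Rightarrow> bool) \<Rightarrow> int option set" where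
  "legal_acts l1 l2 h A =
     insert None (Some ` {j \<in> edges l1 l2. A j \<and> (pos h = j \<or> pos h = near j)})"

definition untrav_out :: "nat \<Rightarrow> nat \<Rightarrow> hist \<Rightarrow> int set" where
  "untrav_out l1 l2 h = {j \<in> edges l1 l2. near j = pos h \<and> j \<notin> traversed h}"

definition dfs_acts :: "nat \<Rightarrow> nat \<Rightarrow> hist \<Rightarrow> (int \<Rightarrow> bool) \<Rightarrow> int option set" where
  "dfs_acts l1 l2 h A =
     (let U = untrav_out l1 l2 h; v = pos h in
      if {j \<in> U. A j} \<noteq> {} then Some ` {j \<in> U. A j}
      else if U \<noteq> {} then {None}
      else if v = 0 then {None}
      else if A v then {Some v} else {None})"

fun hist_pmf :: "nat \<Rightarrow> nat \<Rightarrow> real \<Rightarrow> strategy \<Rightarrow> nat \<Rightarrow> hist pmf" where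
  "hist_pmf l1 l2 p \<sigma> 0 = return_pmf []"
| "hist_pmf l1 l2 p \<sigma> (Suc n) =
     bind_pmf (hist_pmf l1 l2 p \<sigma> n) (\<lambda>h.
       bind_pmf (act l1 l2 p) (\<lambda>A. map_pmf (\<lambda>a. h @ [(A, a)]) (\<sigma> h A)))"

definition reachable :: "nat \<Rightarrow> nat \<Rightarrow> real \<Rightarrow> strategy \<Rightarrow> hist \<Rightarrow> bool" where
  "reachable l1 l2 p \<sigma> h \<longleftrightarrow> (\<exists>n. h \<in> set_pmf (hist_pmf l1 l2 p \<sigma> n))"

definition admissible :: "nat \<Rightarrow> nat \<Rightarrow> real \<Rightarrow> strategy \<Rightarrow> bool" where
  "admissible l1 l2 p \<sigma> \<longleftrightarrow>
     (\<forall>h A. reachable l1 l2 p \<sigma> h \<longrightarrow> A \<in> set_pmf (act l1 l2 p) \<longrightarrow>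
        set_pmf (\<sigma> h A) \<subseteq> legal_acts l1 l2 h A)"

definition is_dfs :: "nat \<Rightarrow> nat \<Rightarrow> real \<Rightarrow> strategy \<Rightarrow> bool" where
  "is_dfs l1 l2 p \<sigma> \<longleftrightarrow>
     (\<forall>h A. reachable l1 l2 p \<sigma> h \<longrightarrow> A \<in> set_pmf (act l1 l2 p) \<longrightarrow>
        set_pmf (\<sigma> h A) \<subseteq> dfs_acts l1 l2 h A)"

definition uniform_dfs :: "nat \<Rightarrow> nat \<Rightarrow> strategy" where
  "uniform_dfs l1 l2 h A = pmf_of_set (dfs_acts l1 l2 h A)"

(* expected first time the searcher traverses edge e: E[T] = \<Sum>_{n\<ge>0} P(T > n) *)
definition exp_time :: "nat \<Rightarrow> nat \<Rightarrow> real \<Rightarrow> strategy \<Rightarrow> int \<Rightarrow> ennreal" where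
  "exp_time l1 l2 p \<sigma> e =
     (\<Sum>n. ennreal (measure_pmf.prob (hist_pmf l1 l2 p \<sigma> n) {h. e \<notin> traversed h}))"

definition payoff_eps :: "nat \<Rightarrow> nat \<Rightarrow> real \<Rightarrow> strategy \<Rightarrow> ennreal" where
  "payoff_eps l1 l2 p \<sigma> =
     ennreal (real l1 / real (l1 + l2)) * exp_time l1 l2 p \<sigma> (int l1)
   + ennreal (real l2 / real (l1 + l2)) * exp_time l1 l2 p \<sigma> (- int l2)"

end

theory Submission
  imports Defs
begin


lemma pos_Nil[simp]: "pos [] = 0" by (simp add: pos_def)
lemma pos_snoc[simp]: "pos (h @ [x]) = step (pos h) (snd x)" by (simp add: pos_def)
lemma trav_Nil[simp]: "traversed [] = {}" by (simp add: traversed_def)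
lemma trav_snoc[simp]: "traversed (h @ [(A,a)]) = traversed h \<union> (case a of None \<Rightarrow> {} | Some j \<Rightarrow> {j})"
  by (auto simp: traversed_def split: option.splits)

lemma finite_edges[simp]: "finite (edges l1 l2)" by (simp add: edges_def)
lemma mem_edges: "j \<in> edges l1 l2 \<longleftrightarrow> - int l2 \<le> j \<and> j \<le> int l1 \<and> j \<noteq> 0"
  by (auto simp: edges_def)

lemma act_outside: "A \<in> set_pmf (act l1 l2 p) \<Longrightarrow> x \<notin> edges l1 l2 \<Longrightarrow> \<not> A x"
  using set_Pi_pmf_subset[of "edges l1 l2" False "\<lambda>_. bernoulli_pmf p"]
  by (auto simp: act_def)

lemma nn_act_one:
  assumes "t \<in> edges l1 l2" "0 \<le> p" "p \<le> 1"
  shows "(\<integral>\<^sup>+A. g (A t) \<partial>act l1 l2 p) = g True * ennreal p + g False * ennreal (1 - p)"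
proof -
  have "(\<integral>\<^sup>+A. g (A t) \<partial>act l1 l2 p) = (\<integral>\<^sup>+b. g b \<partial>map_pmf (\<lambda>A. A t) (act l1 l2 p))"
    by simp
  also have "map_pmf (\<lambda>A. A t) (act l1 l2 p) = bernoulli_pmf p"
    using assms by (simp add: act_def Pi_pmf_component)
  finally show ?thesis using assms by simp
qed

lemma act_pair:
  assumes "x \<in> edges l1 l2" "y \<in> edges l1 l2" "x \<noteq> y"
  shows "map_pmf (\<lambda>A. (A x, A y)) (act l1 l2 p) = pair_pmf (bernoulli_pmf p) (bernoulli_pmf p)"
proof -
  define R where "R = edges l1 l2 - {x}"
  have E: "edges l1 l2 = insert x R" "x \<notin> R" "finite R" "y \<in> R" using assms by (auto simp: R_def)
  have "act l1 l2 p = map_pmf (\<lambda>(a,f). f(x:=a)) (pair_pmf (bernoulli_pmf p) (Pi_pmf R False (\<lambda>_. bernoulli_pmf p)))"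
    unfolding act_def E(1) by (rule Pi_pmf_insert) (use E in auto)
  hence "map_pmf (\<lambda>A. (A x, A y)) (act l1 l2 p) =
     map_pmf (\<lambda>(a,f). (a, f y)) (pair_pmf (bernoulli_pmf p) (Pi_pmf R False (\<lambda>_. bernoulli_pmf p)))"
    using assms by (simp add: pmf.map_comp o_def case_prod_unfold)
  also have "\<dots> = pair_pmf (bernoulli_pmf p) (map_pmf (\<lambda>f. f y) (Pi_pmf R False (\<lambda>_. bernoulli_pmf p)))"
    by (simp add: pair_map_pmf2 apsnd_def map_prod_def case_prod_unfold)
  also have "map_pmf (\<lambda>f. f y) (Pi_pmf R False (\<lambda>_. bernoulli_pmf p)) = bernoulli_pmf p"
    using E by (simp add: Pi_pmf_component)
  finally show ?thesis .
qed

lemma nn_act_two: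
  assumes "x \<in> edges l1 l2" "y \<in> edges l1 l2" "x \<noteq> y" "0 \<le> p" "p \<le> 1"
  shows "(\<integral>\<^sup>+A. g (A x) (A y) \<partial>act l1 l2 p) =
     (g True True * ennreal p + g True False * ennreal (1-p)) * ennreal p +
     (g False True * ennreal p + g False False * ennreal (1-p)) * ennreal (1 - p)"
proof -
  have "(\<integral>\<^sup>+A. g (A x) (A y) \<partial>act l1 l2 p) = (\<integral>\<^sup>+z. g (fst z) (snd z) \<partial>map_pmf (\<lambda>A. (A x, A y)) (act l1 l2 p))"
    by simp
  also have "\<dots> = (\<integral>\<^sup>+a. \<integral>\<^sup>+b. g a b \<partial>bernoulli_pmf p \<partial>bernoulli_pmf p)"
    unfolding act_pair[OF assms(1-3)] by (simp add: nn_integral_pair_pmf')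
  finally show ?thesis using assms by simp
qed

lemma set_hist_Suc: "set_pmf (hist_pmf l1 l2 p \<sigma> (Suc n)) =
   {h @ [(A,a)] | h A a. h \<in> set_pmf (hist_pmf l1 l2 p \<sigma> n) \<and> A \<in> set_pmf (act l1 l2 p) \<and> a \<in> set_pmf (\<sigma> h A)}"
  by auto

lemma reachable_Nil: "reachable l1 l2 p \<sigma> []"
  unfolding reachable_def by (rule exI[of _ 0]) simp

lemma reachable_snoc: "reachable l1 l2 p \<sigma> h \<Longrightarrow> A \<in> set_pmf (act l1 l2 p) \<Longrightarrow> a \<in> set_pmf (\<sigma> h A)
   \<Longrightarrow> reachable l1 l2 p \<sigma> (h @ [(A,a)])"
proof -
  assume "reachable l1 l2 p \<sigma> h" "A \<in> set_pmf (act l1 l2 p)" "a \<in> set_pmf (\<sigma> h A)"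
  then obtain n where "h \<in> set_pmf (hist_pmf l1 l2 p \<sigma> n)" by (auto simp: reachable_def)
  hence "h @ [(A,a)] \<in> set_pmf (hist_pmf l1 l2 p \<sigma> (Suc n))"
    using \<open>A \<in> _\<close> \<open>a \<in> _\<close> by auto
  thus ?thesis unfolding reachable_def by blast
qed

lemma reach_hist: "h \<in> set_pmf (hist_pmf l1 l2 p \<sigma> n) \<Longrightarrow> reachable l1 l2 p \<sigma> h"
  unfolding reachable_def by blast

lemma reachable_induct:
  assumes "reachable l1 l2 p \<sigma> h" "P []"
    "\<And>h A a. reachable l1 l2 p \<sigma> h \<Longrightarrow> P h \<Longrightarrow> A \<in> set_pmf (act l1 l2 p) \<Longrightarrow> a \<in> set_pmf (\<sigma> h A)
        \<Longrightarrow> P (h @ [(A,a)])"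
  shows "P h"
proof -
  obtain n where "h \<in> set_pmf (hist_pmf l1 l2 p \<sigma> n)" using assms(1) by (auto simp: reachable_def)
  thus ?thesis
  proof (induction n arbitrary: h)
    case 0 thus ?case using assms(2) by simp
  next
    case (Suc n)
    then obtain h0 A a where "h = h0 @ [(A,a)]" "h0 \<in> set_pmf (hist_pmf l1 l2 p \<sigma> n)"
       "A \<in> set_pmf (act l1 l2 p)" "a \<in> set_pmf (\<sigma> h0 A)" by auto
    thus ?case using Suc.IH assms(3) reach_hist by blast
  qed
qed

lemma nn_hist_Suc: "(\<integral>\<^sup>+h. f h \<partial>hist_pmf l1 l2 p \<sigma> (Suc n)) =
   (\<integral>\<^sup>+h. (\<integral>\<^sup>+A. (\<integral>\<^sup>+a. f (h @ [(A,a)]) \<partial>\<sigma> h A) \<partial>act l1 l2 p) \<partial>hist_pmf l1 l2 p \<sigma> n)"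
  by simp

lemma UB_generic:
  assumes "\<And>h. reachable l1 l2 p \<sigma> h \<Longrightarrow>
     c h + (\<integral>\<^sup>+A. (\<integral>\<^sup>+a. F (h @ [(A,a)]) \<partial>\<sigma> h A) \<partial>act l1 l2 p) \<le> F h"
  shows "(\<Sum>k<n. \<integral>\<^sup>+h. c h \<partial>hist_pmf l1 l2 p \<sigma> k) + (\<integral>\<^sup>+h. F h \<partial>hist_pmf l1 l2 p \<sigma> n) \<le> F []"
proof (induction n)
  case 0 thus ?case by simp
next
  case (Suc n)
  let ?M = "hist_pmf l1 l2 p \<sigma> n"
  have "(\<integral>\<^sup>+h. c h \<partial>?M) + (\<integral>\<^sup>+h. F h \<partial>hist_pmf l1 l2 p \<sigma> (Suc n)) =
        (\<integral>\<^sup>+h. c h + (\<integral>\<^sup>+A. (\<integral>\<^sup>+a. F (h @ [(A,a)]) \<partial>\<sigma> h A) \<partial>act l1 l2 p) \<partial>?M)"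
    unfolding nn_hist_Suc by (rule nn_integral_add[symmetric]) auto
  also have "\<dots> \<le> (\<integral>\<^sup>+h. F h \<partial>?M)"
    by (rule nn_integral_mono_AE) (auto simp: AE_measure_pmf_iff intro!: assms reach_hist)
  finally have "(\<integral>\<^sup>+h. c h \<partial>?M) + (\<integral>\<^sup>+h. F h \<partial>hist_pmf l1 l2 p \<sigma> (Suc n)) \<le> (\<integral>\<^sup>+h. F h \<partial>?M)" .
  hence "(\<Sum>k<Suc n. \<integral>\<^sup>+h. c h \<partial>hist_pmf l1 l2 p \<sigma> k) + (\<integral>\<^sup>+h. F h \<partial>hist_pmf l1 l2 p \<sigma> (Suc n))
     \<le> (\<Sum>k<n. \<integral>\<^sup>+h. c h \<partial>hist_pmf l1 l2 p \<sigma> k) + (\<integral>\<^sup>+h. F h \<partial>?M)"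
    by (simp add: add.assoc add_left_mono)
  thus ?case using Suc.IH by order
qed

lemma LB_generic:
  assumes "\<And>h. reachable l1 l2 p \<sigma> h \<Longrightarrow>
     c h + (\<integral>\<^sup>+A. (\<integral>\<^sup>+a. F (h @ [(A,a)]) \<partial>\<sigma> h A) \<partial>act l1 l2 p) \<ge> F h"
  shows "(\<Sum>k<n. \<integral>\<^sup>+h. c h \<partial>hist_pmf l1 l2 p \<sigma> k) + (\<integral>\<^sup>+h. F h \<partial>hist_pmf l1 l2 p \<sigma> n) \<ge> F []"
proof (induction n)
  case 0 thus ?case by simp
next
  case (Suc n)
  let ?M = "hist_pmf l1 l2 p \<sigma> n"
  have "(\<integral>\<^sup>+h. c h \<partial>?M) + (\<integral>\<^sup>+h. F h \<partial>hist_pmf l1 l2 p \<sigma> (Suc n)) =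
        (\<integral>\<^sup>+h. c h + (\<integral>\<^sup>+A. (\<integral>\<^sup>+a. F (h @ [(A,a)]) \<partial>\<sigma> h A) \<partial>act l1 l2 p) \<partial>?M)"
    unfolding nn_hist_Suc by (rule nn_integral_add[symmetric]) auto
  also have "\<dots> \<ge> (\<integral>\<^sup>+h. F h \<partial>?M)"
    by (rule nn_integral_mono_AE) (auto simp: AE_measure_pmf_iff intro!: assms reach_hist)
  finally have "(\<integral>\<^sup>+h. c h \<partial>?M) + (\<integral>\<^sup>+h. F h \<partial>hist_pmf l1 l2 p \<sigma> (Suc n)) \<ge> (\<integral>\<^sup>+h. F h \<partial>?M)" .
  hence "(\<Sum>k<Suc n. \<integral>\<^sup>+h. c h \<partial>hist_pmf l1 l2 p \<sigma> k) + (\<integral>\<^sup>+h. F h \<partial>hist_pmf l1 l2 p \<sigma> (Suc n))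
     \<ge> (\<Sum>k<n. \<integral>\<^sup>+h. c h \<partial>hist_pmf l1 l2 p \<sigma> k) + (\<integral>\<^sup>+h. F h \<partial>?M)"
    by (simp add: add.assoc add_left_mono)
  thus ?case using Suc.IH by order
qed




locale G =
  fixes l1 l2 :: nat and p :: real
  assumes l1: "1 \<le> l1" and l2: "1 \<le> l2" and p0: "0 < p" and p1: "p \<le> 1"
begin

definition "L = real (l1 + l2)"
definition "w1 = real l1 / L"
definition "w2 = real l2 / L"
definition "Vs = 1/(p*(2-p)) + (L-1)/p"

definition Wr :: "int \<Rightarrow> bool \<Rightarrow> bool \<Rightarrow> real" where
 "Wr v f1 f2 = (if f1 \<and> f2 then 0 else if f1 then w2*(real_of_int v + real l2)/p
     else if f2 then w1*(real l1 - real_of_int v)/p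
     else if v = 0 then Vs else (L - real_of_int \<bar>v\<bar>)/p)"

definition cr :: "bool \<Rightarrow> bool \<Rightarrow> real" where
 "cr f1 f2 = (if f1 then 0 else w1) + (if f2 then 0 else w2)"

definition tt :: "int \<Rightarrow> bool \<Rightarrow> bool \<Rightarrow> int" where
 "tt v f1 f2 = (if f1 then (if v > 0 then v else v - 1) else if f2 then (if v < 0 then v else v + 1)
    else (if v > 0 then v + 1 else v - 1))"

definition Wn :: "int \<Rightarrow> bool \<Rightarrow> bool \<Rightarrow> int option \<Rightarrow> real" where
 "Wn v f1 f2 a = Wr (step v a) (f1 \<or> a = Some (int l1)) (f2 \<or> a = Some (- int l2))"

definition Gr :: "int \<Rightarrow> bool \<Rightarrow> bool \<Rightarrow> (int \<Rightarrow> bool) \<Rightarrow> real" where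
 "Gr v f1 f2 A = (if \<not> f1 \<and> \<not> f2 \<and> v = 0 then (if A 1 \<or> A (-1) then (L-1)/p else Vs)
    else if A (tt v f1 f2) then Wn v f1 f2 (Some (tt v f1 f2)) else Wr v f1 f2)"

definition RInv :: "int \<Rightarrow> bool \<Rightarrow> bool \<Rightarrow> bool" where
 "RInv v f1 f2 \<longleftrightarrow> - int l2 \<le> v \<and> v \<le> int l1 \<and> (v = int l1 \<longrightarrow> f1) \<and> (v = - int l2 \<longrightarrow> f2)"

lemma L_pos: "L > 0" and L_eq: "L = real l1 + real l2" using l1 by (auto simp: L_def)

lemma Vs_ge0: "Vs \<ge> (L-1)/p"
  using p0 p1 unfolding Vs_def by (simp add: field_simps)

lemma w1_nonneg: "w1 \<ge> 0" and w2_nonneg: "w2 \<ge> 0"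
  using L_pos by (auto simp: w1_def w2_def)

lemma Wf1: "- int l2 \<le> v' \<Longrightarrow> \<not> f2 \<Longrightarrow> Wr v' True (f2 \<or> v' = - int l2) = w2 * (real_of_int v' + real l2) / p"
  by (auto simp: Wr_def)

lemma Wf2: "v' \<le> int l1 \<Longrightarrow> \<not> f1 \<Longrightarrow> Wr v' (f1 \<or> v' = int l1) True = w1 * (real l1 - real_of_int v') / p"
  by (auto simp: Wr_def)

lemma Wff: assumes "- int l2 \<le> v'" "v' \<le> int l1"
  shows "Wr v' (v' = int l1) (v' = - int l2) = (if v' = 0 then Vs else (L - real_of_int \<bar>v'\<bar>)/p)"
proof -
  have a: "w2 * L = real l2" "w1 * L = real l1" using L_pos by (auto simp: w1_def w2_def)
  have "v' = int l1 \<Longrightarrow> w2 * (real_of_int v' + real l2) / p = (L - real_of_int \<bar>v'\<bar>)/p"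
    using a by (simp add: L_eq)
  moreover have "v' = - int l2 \<Longrightarrow> w1 * (real l1 - real_of_int v') / p = (L - real_of_int \<bar>v'\<bar>)/p"
    using a by (simp add: L_eq)
  ultimately show ?thesis using l1 l2 by (auto simp: Wr_def)
qed

definition vt :: "int \<Rightarrow> bool \<Rightarrow> bool \<Rightarrow> int" where
 "vt v f1 f2 = (if f1 then v - 1 else if f2 then v + 1 else if v > 0 then v + 1 else v - 1)"

lemma step_tt:
  assumes "RInv v f1 f2" "\<not> (f1 \<and> f2)" "\<not> (\<not> f1 \<and> \<not> f2 \<and> v = 0)"
  shows "step v (Some (tt v f1 f2)) = vt v f1 f2"
  using assms by (auto simp: tt_def vt_def step_def near_def)

lemma move_facts:
  assumes "RInv v f1 f2" "j \<in> edges l1 l2" "v = j \<or> v = near j"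
  shows "step v (Some j) = v + 1 \<or> step v (Some j) = v - 1"
    "(f1 \<or> j = int l1) = (f1 \<or> step v (Some j) = int l1)"
    "(f2 \<or> j = - int l2) = (f2 \<or> step v (Some j) = - int l2)"
    "- int l2 \<le> step v (Some j)" "step v (Some j) \<le> int l1"
proof -
  have "j > 0 \<or> j < 0" using assms(2) by (auto simp: mem_edges)
  moreover have "j > 0 \<Longrightarrow> near j = j - 1" "j < 0 \<Longrightarrow> near j = j + 1" by (auto simp: near_def)
  ultimately show "step v (Some j) = v + 1 \<or> step v (Some j) = v - 1"
    "(f1 \<or> j = int l1) = (f1 \<or> step v (Some j) = int l1)"
    "(f2 \<or> j = - int l2) = (f2 \<or> step v (Some j) = - int l2)"
    "- int l2 \<le> step v (Some j)" "step v (Some j) \<le> int l1"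
    using assms l1 l2 by (auto simp: RInv_def step_def mem_edges)
qed

lemma Wn_move:
  assumes "RInv v f1 f2" "j \<in> edges l1 l2" "v = j \<or> v = near j"
  shows "Wn v f1 f2 (Some j) = Wr (step v (Some j)) (f1 \<or> step v (Some j) = int l1) (f2 \<or> step v (Some j) = - int l2)"
  using move_facts[OF assms] by (simp add: Wn_def)

lemma step_inj:
  assumes "j \<in> edges l1 l2" "v = j \<or> v = near j" "j' \<in> edges l1 l2" "v = j' \<or> v = near j'"
    "step v (Some j) = step v (Some j')"
  shows "j = j'"
  using assms by (auto simp: step_def near_def mem_edges sgn_if split: if_splits)

lemma tt_edges:
  assumes "RInv v f1 f2" "\<not> (f1 \<and> f2)" "\<not> (\<not> f1 \<and> \<not> f2 \<and> v = 0)"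
  shows "tt v f1 f2 \<in> edges l1 l2" "v = tt v f1 f2 \<or> v = near (tt v f1 f2)"
  using assms l1 l2 by (auto simp: tt_def RInv_def mem_edges near_def)

lemma w12: "w1 + w2 = 1" using L_pos unfolding w1_def w2_def L_eq by (simp add: add_divide_distrib[symmetric])

lemma Wn_toward:
  assumes "RInv v f1 f2" "\<not> (f1 \<and> f2)" "\<not> (\<not> f1 \<and> \<not> f2 \<and> v = 0)"
  shows "Wn v f1 f2 (Some (tt v f1 f2)) = Wr v f1 f2 - cr f1 f2 / p"
proof -
  have r: "- int l2 \<le> v" "v \<le> int l1" "v = int l1 \<longrightarrow> f1" "v = - int l2 \<longrightarrow> f2"
    using assms(1) by (auto simp: RInv_def)
  have W: "Wn v f1 f2 (Some (tt v f1 f2)) = Wr (vt v f1 f2) (f1 \<or> vt v f1 f2 = int l1) (f2 \<or> vt v f1 f2 = - int l2)"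
    using Wn_move[OF assms(1) tt_edges[OF assms]] step_tt[OF assms] by simp
  consider (a) "f1" "\<not> f2" | (b) "\<not> f1" "f2" | (c) "\<not> f1" "\<not> f2" "v > 0" | (d) "\<not> f1" "\<not> f2" "v < 0"
    using assms(2,3) by fastforce
  thus ?thesis
  proof cases
    case a
    hence "vt v f1 f2 = v - 1" by (simp add: vt_def)
    moreover have "- int l2 \<le> v - 1" using r a by auto
    ultimately have "Wn v f1 f2 (Some (tt v f1 f2)) = w2 * (real_of_int (v - 1) + real l2) / p"
      using a W Wf1[of "v - 1" f2] by simp
    thus ?thesis using a by (simp add: Wr_def cr_def diff_divide_distrib[symmetric] algebra_simps)
  next
    case b
    hence "vt v f1 f2 = v + 1" by (simp add: vt_def)
    moreover have "v + 1 \<le> int l1" using r b by auto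
    ultimately have "Wn v f1 f2 (Some (tt v f1 f2)) = w1 * (real l1 - real_of_int (v + 1)) / p"
      using b W Wf2[of "v + 1" f1] by simp
    thus ?thesis using b by (simp add: Wr_def cr_def diff_divide_distrib[symmetric] algebra_simps)
  next
    case c
    hence "vt v f1 f2 = v + 1" by (simp add: vt_def)
    moreover have "v + 1 \<le> int l1" using r c by auto
    ultimately have "Wn v f1 f2 (Some (tt v f1 f2)) = (L - real_of_int (v + 1)) / p"
      using c W Wff[of "v + 1"] r by simp
    thus ?thesis using c w12 by (simp add: Wr_def cr_def diff_divide_distrib[symmetric] algebra_simps)
  next
    case d
    hence "vt v f1 f2 = v - 1" by (simp add: vt_def)
    moreover have "- int l2 \<le> v - 1" using r d by auto
    ultimately have "Wn v f1 f2 (Some (tt v f1 f2)) = (L + real_of_int (v - 1)) / p"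
      using d W Wff[of "v - 1"] r by simp
    thus ?thesis using d w12 by (simp add: Wr_def cr_def diff_divide_distrib[symmetric] algebra_simps)
  qed
qed

lemma Vs_ge: "Vs \<ge> (L-1)/p"
  using p0 p1 unfolding Vs_def by (simp add: field_simps)

lemma Wr_nonneg: "- int l2 \<le> v \<Longrightarrow> v \<le> int l1 \<Longrightarrow> Wr v f1 f2 \<ge> 0"
proof -
  assume a: "- int l2 \<le> v" "v \<le> int l1"
  have "(L-1)/p \<ge> 0" using p0 l1 by (simp add: L_eq)
  hence "Vs \<ge> 0" using Vs_ge by linarith
  moreover have "L - real_of_int \<bar>v\<bar> \<ge> 0" using a by (simp add: L_eq)
  ultimately show ?thesis using a L_pos p0
    by (auto simp: Wr_def w1_def w2_def intro!: divide_nonneg_pos mult_nonneg_nonneg)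
qed

lemma Wn_nonneg:
  assumes "RInv v f1 f2" "\<not> (f1 \<and> f2)" "\<not> (\<not> f1 \<and> \<not> f2 \<and> v = 0)"
  shows "Wn v f1 f2 (Some (tt v f1 f2)) \<ge> 0"
  using Wn_move[OF assms(1) tt_edges[OF assms]] move_facts(4,5)[OF assms(1) tt_edges[OF assms]] Wr_nonneg
  by simp

lemma cr_nonneg: "cr f1 f2 \<ge> 0"
  using L_pos by (auto simp: cr_def w1_def w2_def)

lemma mix: "0 \<le> x \<Longrightarrow> 0 \<le> y \<Longrightarrow> 0 \<le> q \<Longrightarrow> q \<le> 1 \<Longrightarrow>
   ennreal x * ennreal q + ennreal y * ennreal (1-q) = ennreal (x*q + y*(1-q))"
  by (simp add: ennreal_plus ennreal_mult)

lemma fin: "I = ennreal E \<Longrightarrow> 0 \<le> c \<Longrightarrow> 0 \<le> E \<Longrightarrow> c + E = W \<Longrightarrow> ennreal c + I = ennreal W"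
  by (simp add: ennreal_plus[symmetric])


lemma root_id: "0 < (q::real) \<Longrightarrow> q \<le> 1 \<Longrightarrow>
   1 + (X*q + X*(1-q))*q + (X*q + (1/(q*(2-q)) + X)*(1-q))*(1-q) = 1/(q*(2-q)) + X"
  by (simp add: field_simps)

lemma bellman:
  assumes "RInv v f1 f2"
  shows "ennreal (cr f1 f2) + (\<integral>\<^sup>+A. ennreal (Gr v f1 f2 A) \<partial>act l1 l2 p) = ennreal (Wr v f1 f2)"
proof (cases "f1 \<and> f2")
  case True
  hence "\<And>A. Gr v f1 f2 A = 0" by (simp add: Gr_def Wn_def Wr_def)
  thus ?thesis using True by (simp add: Wr_def cr_def)
next
  case nb: False
  show ?thesis
  proof (cases "\<not> f1 \<and> \<not> f2 \<and> v = 0")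
    case root: True
    have e: "(1::int) \<in> edges l1 l2" "(-1::int) \<in> edges l1 l2" using l1 l2 by (auto simp: mem_edges)
    define X where "X = (L-1)/p"
    define Y where "Y = Vs"
    have X: "X \<ge> 0" using p0 l1 l2 by (simp add: L_eq X_def)
    have Y: "Y \<ge> 0" using X Vs_ge by (simp add: X_def Y_def)
    have p0': "0 \<le> p" using p0 by simp
    have q1: "1 - p \<ge> 0" using p1 by simp
    have n1: "X * p + X * (1-p) \<ge> 0" "X * p + Y * (1-p) \<ge> 0"
      using X Y p0' q1 by (simp_all add: add_nonneg_nonneg mult_nonneg_nonneg)
    have n2: "(X * p + X * (1-p)) * p + (X * p + Y * (1-p)) * (1 - p) \<ge> 0"
      using n1 p0' q1 by (simp add: add_nonneg_nonneg mult_nonneg_nonneg)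
    have "(\<integral>\<^sup>+A. ennreal (Gr v f1 f2 A) \<partial>act l1 l2 p) =
          (\<integral>\<^sup>+A. (\<lambda>a b. ennreal (if a \<or> b then X else Y)) (A 1) (A (-1)) \<partial>act l1 l2 p)"
      using root unfolding X_def Y_def by (simp add: Gr_def)
    also have "\<dots> = ennreal ((X * p + X * (1-p)) * p + (X * p + Y * (1-p)) * (1 - p))"
        apply (subst nn_act_two[OF e _ p0' p1], simp)
        apply (simp only: if_True if_False simp_thms)
        apply (simp only: mix[OF X X p0' p1] mix[OF X Y p0' p1] mix[OF n1 p0' p1])
        done
    finally show ?thesis 
      apply (rule fin[OF _ cr_nonneg n2])
      using root root_id[OF p0 p1, of X] w12 unfolding Y_def Vs_def X_def
      by (simp add: cr_def Wr_def Vs_def)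
  next
    case nr: False
    define t where "t = tt v f1 f2"
    have te: "t \<in> edges l1 l2" using tt_edges[OF assms nb nr] by (simp add: t_def)
    have W1: "Wn v f1 f2 (Some t) = Wr v f1 f2 - cr f1 f2 / p" using Wn_toward[OF assms nb nr] by (simp add: t_def)
    have W1n: "Wn v f1 f2 (Some t) \<ge> 0" using Wn_nonneg[OF assms nb nr] by (simp add: t_def)
    have W0: "Wr v f1 f2 \<ge> 0" using assms Wr_nonneg by (auto simp: RInv_def)
    have "(\<integral>\<^sup>+A. ennreal (Gr v f1 f2 A) \<partial>act l1 l2 p) =
          (\<integral>\<^sup>+A. (\<lambda>a. ennreal (if a then Wn v f1 f2 (Some t) else Wr v f1 f2)) (A t) \<partial>act l1 l2 p)"
    proof -
      have "\<And>A. Gr v f1 f2 A = (if A t then Wn v f1 f2 (Some t) else Wr v f1 f2)"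
        using nr unfolding Gr_def t_def by auto
      thus ?thesis by simp
    qed
    also have "\<dots> = ennreal (Wn v f1 f2 (Some t) * p + Wr v f1 f2 * (1-p))"
      apply (subst nn_act_one[OF te]) using p0 p1 W1n W0
      by (simp_all only: if_True if_False mix[OF W1n W0] less_imp_le)
    finally show ?thesis
      apply (rule fin)
      using p0 p1 W1n W0 cr_nonneg apply (auto intro!: add_nonneg_nonneg mult_nonneg_nonneg)[2]
      using p0 by (simp add: W1 field_simps)
  qed
qed

lemma Gr_le_Wr:
  assumes "RInv v f1 f2"
  shows "Gr v f1 f2 A \<le> Wr v f1 f2"
proof -
  have "cr f1 f2 / p \<ge> 0" using cr_nonneg p0 by simp
  show ?thesis
  proof (cases "f1 \<and> f2")
    case True thus ?thesis by (simp add: Gr_def Wn_def Wr_def)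
  next
    case nb: False
    show ?thesis
    proof (cases "\<not> f1 \<and> \<not> f2 \<and> v = 0")
      case True thus ?thesis using Vs_ge by (simp add: Gr_def Wr_def)
    next
      case False
      thus ?thesis using Wn_toward[OF assms nb False] \<open>cr f1 f2 / p \<ge> 0\<close> unfolding Gr_def by auto
    qed
  qed
qed

lemma Wn_away:
  assumes "RInv v f1 f2" "\<not> (f1 \<and> f2)" "\<not> (\<not> f1 \<and> \<not> f2 \<and> v = 0)"
    "j \<in> edges l1 l2" "v = j \<or> v = near j" "j \<noteq> tt v f1 f2"
  shows "Wn v f1 f2 (Some j) \<ge> Wr v f1 f2"
proof -
  have r: "- int l2 \<le> v" "v \<le> int l1" "v = int l1 \<longrightarrow> f1" "v = - int l2 \<longrightarrow> f2"
    using assms(1) by (auto simp: RInv_def)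
  define v' where "v' = step v (Some j)"
  have ne: "v' \<noteq> vt v f1 f2"
    using step_inj[OF assms(4,5) tt_edges[OF assms(1-3)]] step_tt[OF assms(1-3)] assms(6)
    unfolding v'_def by metis
  have mv: "v' = v + 1 \<or> v' = v - 1" "- int l2 \<le> v'" "v' \<le> int l1"
    using move_facts[OF assms(1,4,5)] by (auto simp: v'_def)
  have W: "Wn v f1 f2 (Some j) = Wr v' (f1 \<or> v' = int l1) (f2 \<or> v' = - int l2)"
    using Wn_move[OF assms(1,4,5)] by (simp add: v'_def)
  consider (a) "f1" "\<not> f2" | (b) "\<not> f1" "f2" | (c) "\<not> f1" "\<not> f2" "v > 0" | (d) "\<not> f1" "\<not> f2" "v < 0"
    using assms(2,3) by fastforce
  thus ?thesis
  proof cases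
    case a
    hence "v' = v + 1" using ne mv by (auto simp: vt_def)
    thus ?thesis using a W Wf1[of v' f2] mv w2_nonneg p0 by (simp add: Wr_def divide_right_mono mult_left_mono)
  next
    case b
    hence "v' = v - 1" using ne mv by (auto simp: vt_def)
    thus ?thesis using b W Wf2[of v' f1] mv w1_nonneg p0 by (simp add: Wr_def divide_right_mono mult_left_mono)
  next
    case c
    hence "v' = v - 1" using ne mv by (auto simp: vt_def)
    show ?thesis
    proof (cases "v' = 0")
      case True
      hence "real_of_int v = 1" using \<open>v' = v - 1\<close> by simp
      thus ?thesis using True c W Wff[of v'] mv Vs_ge p0 by (simp add: Wr_def)
    next
      case False
      thus ?thesis using \<open>v' = v - 1\<close> c W Wff[of v'] mv Vs_ge p0 by (auto simp: Wr_def divide_right_mono)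
    qed
  next
    case d
    hence "v' = v + 1" using ne mv by (auto simp: vt_def)
    show ?thesis
    proof (cases "v' = 0")
      case True
      hence "real_of_int v = -1" using \<open>v' = v + 1\<close> by simp
      thus ?thesis using True d W Wff[of v'] mv Vs_ge p0 by (simp add: Wr_def)
    next
      case False
      thus ?thesis using \<open>v' = v + 1\<close> d W Wff[of v'] mv Vs_ge p0 by (auto simp: Wr_def divide_right_mono)
    qed
  qed
qed

lemma lb_step:
  assumes "RInv v f1 f2"
    "a = None \<or> (\<exists>j. a = Some j \<and> j \<in> edges l1 l2 \<and> A j \<and> (v = j \<or> v = near j))"
  shows "Gr v f1 f2 A \<le> Wn v f1 f2 a"
proof (cases "f1 \<and> f2")
  case True thus ?thesis by (simp add: Gr_def Wn_def Wr_def)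
next
  case nb: False
  show ?thesis
  proof (cases a)
    case None thus ?thesis using Gr_le_Wr[OF assms(1)] by (simp add: Wn_def step_def)
  next
    case (Some j)
    with assms(2) have j: "j \<in> edges l1 l2" "A j" "v = j \<or> v = near j" by auto
    show ?thesis
    proof (cases "\<not> f1 \<and> \<not> f2 \<and> v = 0")
      case root: True
      hence j1: "j = 1 \<or> j = -1" using j by (auto simp: near_def mem_edges sgn_if split: if_splits)
      hence "A 1 \<or> A (-1)" using j(2) by auto
      moreover note j1
      moreover have "p + p * real l2 > 0" "p + p * real l1 > 0" using p0 by (auto intro: add_pos_nonneg)
      ultimately have "Wn v f1 f2 a = (L-1)/p"
        using root Some Wn_move[OF assms(1) j(1) j(3)] Wff[of "step v (Some j)"] 
          move_facts(4,5)[OF assms(1) j(1) j(3)] 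
        by (auto simp: step_def near_def)
      thus ?thesis using root Vs_ge \<open>A 1 \<or> A (-1)\<close> by (simp add: Gr_def)
    next
      case nr: False
      show ?thesis
      proof (cases "j = tt v f1 f2")
        case True
        have "Gr v f1 f2 A = (if A (tt v f1 f2) then Wn v f1 f2 (Some (tt v f1 f2)) else Wr v f1 f2)"
          using nr unfolding Gr_def by auto
        thus ?thesis using True j Some by simp
      next
        case False
        thus ?thesis using Wn_away[OF assms(1) nb nr j(1) j(3) False] Gr_le_Wr[OF assms(1), of A] Some
          by simp
      qed
    qed
  qed
qed

end



lemma exp_time_nn: "exp_time l1 l2 p \<sigma> e =
   (\<Sum>n. \<integral>\<^sup>+h. indicator {h. e \<notin> traversed h} h \<partial>hist_pmf l1 l2 p \<sigma> n)"
  unfolding exp_time_def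
  by (simp add: measure_pmf.emeasure_eq_measure[symmetric])

lemma lb_series:
  fixes r :: "nat \<Rightarrow> real" and F0 K :: real
  assumes r: "\<And>k. 0 \<le> r k" and K: "0 \<le> K"
    and h: "\<And>n. ennreal F0 \<le> (\<Sum>k<n. ennreal (r k)) + ennreal K * ennreal (r n)"
  shows "ennreal F0 \<le> (\<Sum>k. ennreal (r k))"
proof (cases "(\<Sum>k. ennreal (r k)) = top")
  case True thus ?thesis by simp
next
  case False
  have s: "summable r" by (rule summable_suminf_not_top[OF r False])
  have eq: "(\<Sum>k. ennreal (r k)) = ennreal (suminf r)" by (rule suminf_ennreal2[OF r s])
  show ?thesis
  proof (cases "F0 \<le> 0")
    case True thus ?thesis by (simp add: ennreal_neg)
  next
    case F: False
    have b: "F0 \<le> suminf r + K * r n" for n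
    proof -
      have e: "ennreal ((\<Sum>k<n. r k) + K * r n) = (\<Sum>k<n. ennreal (r k)) + ennreal K * ennreal (r n)"
        using r K by (simp only: ennreal_plus[OF sum_nonneg mult_nonneg_nonneg] sum_ennreal ennreal_mult)
      have "ennreal F0 \<le> ennreal ((\<Sum>k<n. r k) + K * r n)"
        unfolding e by (rule h)
      hence "F0 \<le> (\<Sum>k<n. r k) + K * r n"
        using r K by (subst (asm) ennreal_le_iff) (auto intro!: add_nonneg_nonneg sum_nonneg mult_nonneg_nonneg)
      moreover have "(\<Sum>k<n. r k) \<le> suminf r" using s r by (intro sum_le_suminf) auto
      ultimately show ?thesis by linarith
    qed
    have "(\<lambda>n. suminf r + K * r n) \<longlonglongrightarrow> suminf r + K * 0"
      by (intro tendsto_intros summable_LIMSEQ_zero s)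
    hence "F0 \<le> suminf r + K * 0"
      by (rule tendsto_lowerbound) (use b in auto)
    thus ?thesis unfolding eq by (simp add: ennreal_leI)
  qed
qed

context G begin

definition fl1 :: "hist \<Rightarrow> bool" where "fl1 h \<longleftrightarrow> int l1 \<in> traversed h"
definition fl2 :: "hist \<Rightarrow> bool" where "fl2 h \<longleftrightarrow> - int l2 \<in> traversed h"
definition Wh :: "hist \<Rightarrow> ennreal" where "Wh h = ennreal (Wr (pos h) (fl1 h) (fl2 h))"
definition ch :: "hist \<Rightarrow> ennreal" where "ch h = ennreal (cr (fl1 h) (fl2 h))"

lemma fl_snoc[simp]: "fl1 (h @ [(A,a)]) = (fl1 h \<or> a = Some (int l1))"
   "fl2 (h @ [(A,a)]) = (fl2 h \<or> a = Some (- int l2))"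
  by (auto simp: fl1_def fl2_def split: option.splits)

lemma Wh_snoc: "Wh (h @ [(A,a)]) = ennreal (Wn (pos h) (fl1 h) (fl2 h) a)"
  by (simp add: Wh_def Wn_def)

lemma payoff_nn: "payoff_eps l1 l2 p \<sigma> = (\<Sum>n. \<integral>\<^sup>+h. ch h \<partial>hist_pmf l1 l2 p \<sigma> n)"
proof -
  have "ch h = ennreal w1 * indicator {h. int l1 \<notin> traversed h} h + ennreal w2 * indicator {h. - int l2 \<notin> traversed h} h" for h
    using w1_nonneg w2_nonneg by (auto simp: ch_def cr_def fl1_def fl2_def ennreal_plus)
  hence "(\<integral>\<^sup>+h. ch h \<partial>hist_pmf l1 l2 p \<sigma> n) =
     ennreal w1 * (\<integral>\<^sup>+h. indicator {h. int l1 \<notin> traversed h} h \<partial>hist_pmf l1 l2 p \<sigma> n) +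
     ennreal w2 * (\<integral>\<^sup>+h. indicator {h. - int l2 \<notin> traversed h} h \<partial>hist_pmf l1 l2 p \<sigma> n)" for n
    by (simp add: nn_integral_add nn_integral_cmult)
  hence "(\<Sum>n. \<integral>\<^sup>+h. ch h \<partial>hist_pmf l1 l2 p \<sigma> n) =
      ennreal w1 * exp_time l1 l2 p \<sigma> (int l1) + ennreal w2 * exp_time l1 l2 p \<sigma> (- int l2)"
    unfolding exp_time_nn by (simp add: suminf_add[symmetric])
  thus ?thesis unfolding payoff_eps_def w1_def w2_def L_def by simp
qed

lemma legal_iff: "a \<in> legal_acts l1 l2 h A \<longleftrightarrow>
    a = None \<or> (\<exists>j. a = Some j \<and> j \<in> edges l1 l2 \<and> A j \<and> (pos h = j \<or> pos h = near j))"
  by (auto simp: legal_acts_def)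

lemma RInv0: "RInv 0 False False"
  using l1 l2 by (simp add: RInv_def)

lemma RInv_adm:
  assumes "admissible l1 l2 p \<tau>" "reachable l1 l2 p \<tau> h"
  shows "RInv (pos h) (fl1 h) (fl2 h)"
  using assms(2)
proof (rule reachable_induct)
  show "RInv (pos []) (fl1 []) (fl2 [])" using RInv0 by (simp add: fl1_def fl2_def)
next
  fix h A a
  assume r: "reachable l1 l2 p \<tau> h" "RInv (pos h) (fl1 h) (fl2 h)" "A \<in> set_pmf (act l1 l2 p)"
    "a \<in> set_pmf (\<tau> h A)"
  hence "a \<in> legal_acts l1 l2 h A" using assms(1) unfolding admissible_def by blast
  then consider "a = None" | j where "a = Some j" "j \<in> edges l1 l2" "pos h = j \<or> pos h = near j"
    unfolding legal_iff by blast
  thus "RInv (pos (h @ [(A, a)])) (fl1 (h @ [(A, a)])) (fl2 (h @ [(A, a)]))"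
  proof cases
    case 1 thus ?thesis using r(2) by (simp add: step_def)
  next
    case 2
    note m = move_facts[OF r(2) 2(2,3)]
    thus ?thesis using 2 unfolding RInv_def by auto
  qed
qed

lemma nn_const_pmf: "(\<integral>\<^sup>+x. c \<partial>measure_pmf M) = c"
  by simp

lemma lb_hist:
  assumes "admissible l1 l2 p \<tau>" "reachable l1 l2 p \<tau> h"
  shows "ch h + (\<integral>\<^sup>+A. (\<integral>\<^sup>+a. Wh (h @ [(A,a)]) \<partial>\<tau> h A) \<partial>act l1 l2 p) \<ge> Wh h"
proof -
  let ?v = "pos h" and ?f1 = "fl1 h" and ?f2 = "fl2 h"
  have R: "RInv ?v ?f1 ?f2" by (rule RInv_adm[OF assms])
  have "(\<integral>\<^sup>+A. ennreal (Gr ?v ?f1 ?f2 A) \<partial>act l1 l2 p) \<le> (\<integral>\<^sup>+A. (\<integral>\<^sup>+a. Wh (h @ [(A,a)]) \<partial>\<tau> h A) \<partial>act l1 l2 p)"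
  proof (rule nn_integral_mono_AE, rule AE_pmfI)
    fix A assume A: "A \<in> set_pmf (act l1 l2 p)"
    have "ennreal (Gr ?v ?f1 ?f2 A) = (\<integral>\<^sup>+a. ennreal (Gr ?v ?f1 ?f2 A) \<partial>\<tau> h A)" by simp
    also have "\<dots> \<le> (\<integral>\<^sup>+a. Wh (h @ [(A,a)]) \<partial>\<tau> h A)"
    proof (rule nn_integral_mono_AE, rule AE_pmfI)
      fix a assume "a \<in> set_pmf (\<tau> h A)"
      hence "a \<in> legal_acts l1 l2 h A" using assms A unfolding admissible_def by blast
      hence "Gr ?v ?f1 ?f2 A \<le> Wn ?v ?f1 ?f2 a" using lb_step[OF R] unfolding legal_iff by blast
      thus "ennreal (Gr ?v ?f1 ?f2 A) \<le> Wh (h @ [(A, a)])" by (simp add: Wh_snoc ennreal_leI)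
    qed
    finally show "ennreal (Gr ?v ?f1 ?f2 A) \<le> (\<integral>\<^sup>+a. Wh (h @ [(A,a)]) \<partial>\<tau> h A)" .
  qed
  hence "ch h + (\<integral>\<^sup>+A. ennreal (Gr ?v ?f1 ?f2 A) \<partial>act l1 l2 p) \<le>
     ch h + (\<integral>\<^sup>+A. (\<integral>\<^sup>+a. Wh (h @ [(A,a)]) \<partial>\<tau> h A) \<partial>act l1 l2 p)" by (rule add_left_mono)
  thus ?thesis using bellman[OF R] by (simp add: ch_def Wh_def)
qed

lemma Wr_le_Vs:
  assumes "RInv v f1 f2" shows "Wr v f1 f2 \<le> Vs"
proof -
  have r: "- int l2 \<le> v" "v \<le> int l1" "v = int l1 \<longrightarrow> f1" "v = - int l2 \<longrightarrow> f2"
    using assms by (auto simp: RInv_def)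
  have a: "w2 * L = real l2" "w1 * L = real l1" using L_pos by (auto simp: w1_def w2_def)
  have V: "(L-1)/p \<le> Vs" by (rule Vs_ge)
  have "w2 * (real_of_int v + real l2) \<le> w2 * L" using r w2_nonneg by (intro mult_left_mono) (auto simp: L_eq)
  hence 1: "w2 * (real_of_int v + real l2) / p \<le> (L-1)/p" using a l1 p0 by (simp add: divide_right_mono L_eq)
  have "w1 * (real l1 - real_of_int v) \<le> w1 * L" using r w1_nonneg by (intro mult_left_mono) (auto simp: L_eq)
  hence 2: "w1 * (real l1 - real_of_int v) / p \<le> (L-1)/p" using a l2 p0 by (simp add: divide_right_mono L_eq)
  have 3: "v \<noteq> 0 \<Longrightarrow> (L - real_of_int \<bar>v\<bar>)/p \<le> (L-1)/p" using p0 by (simp add: divide_right_mono)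
  have "0 \<le> (L-1)/p" using p0 l1 by (simp add: L_eq)
  thus ?thesis using 1 2 3 V unfolding Wr_def by auto
qed

lemma Vs0: "0 \<le> Vs"
proof -
  have "0 \<le> (L-1)/p" using p0 l1 by (simp add: L_eq)
  thus ?thesis using Vs_ge by linarith
qed

lemma Wr_le_K:
  assumes "RInv v f1 f2" shows "Wr v f1 f2 \<le> (L * Vs) * cr f1 f2"
proof (cases "f1 \<and> f2")
  case True thus ?thesis by (simp add: Wr_def cr_def)
next
  case False
  have "1 / L \<le> w1" "1 / L \<le> w2" using l1 l2 L_pos by (auto simp: w1_def w2_def divide_right_mono)
  hence c: "1 / L \<le> cr f1 f2" using False w1_nonneg w2_nonneg by (auto simp: cr_def)
  have V: "0 \<le> Vs" using Vs0 .
  have "Wr v f1 f2 \<le> Vs" by (rule Wr_le_Vs[OF assms])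
  also have "Vs = (L * Vs) * (1 / L)" using L_pos by simp
  also have "\<dots> \<le> (L * Vs) * cr f1 f2" using c V L_pos by (intro mult_left_mono) auto
  finally show ?thesis .
qed

lemma cr_le1: "cr f1 f2 \<le> 1" using w12 w1_nonneg w2_nonneg by (auto simp: cr_def)

theorem lower_bound:
  assumes "admissible l1 l2 p \<tau>"
  shows "ennreal Vs \<le> payoff_eps l1 l2 p \<tau>"
proof -
  let ?M = "hist_pmf l1 l2 p \<tau>"
  define r where "r n = enn2real (\<integral>\<^sup>+h. ch h \<partial>?M n)" for n
  have fin: "(\<integral>\<^sup>+h. ch h \<partial>?M n) \<le> 1" for n
  proof -
    have "(\<integral>\<^sup>+h. ch h \<partial>?M n) \<le> (\<integral>\<^sup>+h. 1 \<partial>?M n)"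
      by (rule nn_integral_mono) (simp add: ch_def cr_le1)
    thus ?thesis by simp
  qed
  have chr: "(\<integral>\<^sup>+h. ch h \<partial>?M n) = ennreal (r n)" for n
  proof -
    have "(\<integral>\<^sup>+h. ch h \<partial>?M n) \<noteq> top" using fin[of n] by (auto simp: top_unique)
    thus ?thesis unfolding r_def by (simp add: less_top)
  qed
  have K: "0 \<le> L * Vs" using Vs0 L_pos by simp
  have W0: "Wh [] = ennreal Vs" by (simp add: Wh_def Wr_def fl1_def fl2_def)
  have step: "ennreal Vs \<le> (\<Sum>k<n. ennreal (r k)) + ennreal (L * Vs) * ennreal (r n)" for n
  proof -
    have "ennreal Vs \<le> (\<Sum>k<n. \<integral>\<^sup>+h. ch h \<partial>?M k) + (\<integral>\<^sup>+h. Wh h \<partial>?M n)"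
      unfolding W0[symmetric] by (rule LB_generic) (rule lb_hist[OF assms])
    also have "(\<integral>\<^sup>+h. Wh h \<partial>?M n) \<le> (\<integral>\<^sup>+h. ennreal (L * Vs) * ch h \<partial>?M n)"
    proof (rule nn_integral_mono_AE, rule AE_pmfI)
      fix h assume "h \<in> set_pmf (?M n)"
      hence R: "RInv (pos h) (fl1 h) (fl2 h)" using RInv_adm[OF assms] reach_hist by blast
      show "Wh h \<le> ennreal (L * Vs) * ch h"
        unfolding Wh_def ch_def using Wr_le_K[OF R] K cr_nonneg
        by (simp add: ennreal_mult[symmetric] ennreal_leI)
    qed
    also have "\<dots> = ennreal (L * Vs) * ennreal (r n)" by (simp add: nn_integral_cmult chr)
    finally show ?thesis by (simp add: chr add_left_mono)
  qed
  have "ennreal Vs \<le> (\<Sum>k. ennreal (r k))"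
    by (rule lb_series[OF _ K step]) (simp add: r_def)
  thus ?thesis unfolding payoff_nn chr .
qed

end



context G begin

definition DS :: "int \<Rightarrow> int \<Rightarrow> int \<Rightarrow> bool" where
 "DS v a b \<longleftrightarrow> 0 \<le> a \<and> a \<le> int l1 \<and> 0 \<le> b \<and> b \<le> int l2 \<and>
    ((0 \<le> v \<and> v \<le> a \<and> (v = a \<or> a = int l1) \<and> (b = 0 \<or> b = int l2)) \<or>
     (v \<le> 0 \<and> - v \<le> b \<and> (- v = b \<or> b = int l2) \<and> (a = 0 \<or> a = int l1)))"

definition TS :: "int \<Rightarrow> int \<Rightarrow> int set" where
 "TS a b = {j. (1 \<le> j \<and> j \<le> a) \<or> (- b \<le> j \<and> j \<le> -1)}"

lemma cand: "j \<in> edges l1 l2 \<and> near j = v \<longleftrightarrow>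
   (0 \<le> v \<and> v < int l1 \<and> j = v + 1) \<or> (- int l2 < v \<and> v \<le> 0 \<and> j = v - 1)"
  by (cases "j > 0") (auto simp: mem_edges near_def)

lemma DS_flags: "DS v a b \<Longrightarrow> (int l1 \<in> TS a b \<longleftrightarrow> a = int l1) \<and> (- int l2 \<in> TS a b \<longleftrightarrow> b = int l2)"
  using l1 l2 by (auto simp: DS_def TS_def)

lemma DS_RInv: "DS v a b \<Longrightarrow> RInv v (a = int l1) (b = int l2)"
  by (auto simp: DS_def RInv_def)

lemma DS_cases:
  assumes "DS v a b"
  obtains (pos) "v > 0" "v \<le> a" "v = a \<or> a = int l1" "b = 0 \<or> b = int l2" "a \<le> int l1" "0 \<le> b" "b \<le> int l2"
  | (neg) "v < 0" "- v \<le> b" "- v = b \<or> b = int l2" "a = 0 \<or> a = int l1" "b \<le> int l2" "0 \<le> a" "a \<le> int l1"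
  | (zero) "v = 0" "a = 0 \<or> a = int l1" "b = 0 \<or> b = int l2"
  using assms unfolding DS_def by (cases "v > 0"; cases "v < 0") auto

lemma U_DS:
  assumes "DS v a b"
  shows "{j \<in> edges l1 l2. near j = v \<and> j \<notin> TS a b} =
    (if a \<noteq> int l1 \<and> b \<noteq> int l2 \<and> v = 0 then {1, -1}
     else if a = int l1 \<and> b = int l2 then {}
     else if tt v (a = int l1) (b = int l2) = v then {} else {tt v (a = int l1) (b = int l2)})"
proof -
  have e: "{j \<in> edges l1 l2. near j = v \<and> j \<notin> TS a b} =
     {j. ((0 \<le> v \<and> v < int l1 \<and> j = v + 1) \<or> (- int l2 < v \<and> v \<le> 0 \<and> j = v - 1)) \<and> j \<notin> TS a b}"
    using cand by blast
  show ?thesis using assms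
  proof (cases rule: DS_cases)
    case pos
    show ?thesis
    proof (cases "a = int l1")
      case True
      hence X: "{j. ((0 \<le> v \<and> v < int l1 \<and> j = v + 1) \<or> (- int l2 < v \<and> v \<le> 0 \<and> j = v - 1)) \<and> j \<notin> TS a b} = {}"
        using pos by (auto simp: TS_def)
      have tv: "tt v (a = int l1) (b = int l2) = v" using True pos by (simp add: tt_def)
      show ?thesis unfolding e X tv using True pos by simp
    next
      case False
      hence X: "{j. ((0 \<le> v \<and> v < int l1 \<and> j = v + 1) \<or> (- int l2 < v \<and> v \<le> 0 \<and> j = v - 1)) \<and> j \<notin> TS a b} = {v + 1}"
        using pos by (auto simp: TS_def)
      have tv: "tt v (a = int l1) (b = int l2) = v + 1" using False pos by (simp add: tt_def)
      show ?thesis unfolding e X tv using False pos by simp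
    qed
  next
    case neg
    show ?thesis
    proof (cases "b = int l2")
      case True
      hence X: "{j. ((0 \<le> v \<and> v < int l1 \<and> j = v + 1) \<or> (- int l2 < v \<and> v \<le> 0 \<and> j = v - 1)) \<and> j \<notin> TS a b} = {}"
        using neg by (auto simp: TS_def)
      show ?thesis unfolding e X using True neg by (cases "a = int l1") (simp_all add: tt_def)
    next
      case False
      hence X: "{j. ((0 \<le> v \<and> v < int l1 \<and> j = v + 1) \<or> (- int l2 < v \<and> v \<le> 0 \<and> j = v - 1)) \<and> j \<notin> TS a b} = {v - 1}"
        using neg by (auto simp: TS_def)
      have tv: "tt v (a = int l1) (b = int l2) = v - 1" using False neg by (simp add: tt_def)
      show ?thesis unfolding e X tv using False neg by simp
    qed
  next
    case zero
    have X: "{j. ((0 \<le> v \<and> v < int l1 \<and> j = v + 1) \<or> (- int l2 < v \<and> v \<le> 0 \<and> j = v - 1)) \<and> j \<notin> TS a b}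
       = (if a = 0 then {1} else {}) \<union> (if b = 0 then {-1} else {})"
      using zero l1 l2 by (auto simp: TS_def)
    show ?thesis unfolding e X using zero l1 l2 by (auto simp: tt_def)
  qed
qed

definition dfs_set :: "int \<Rightarrow> int \<Rightarrow> int \<Rightarrow> (int \<Rightarrow> bool) \<Rightarrow> int option set" where
 "dfs_set v a b A = (if a \<noteq> int l1 \<and> b \<noteq> int l2 \<and> v = 0 then
      (if A 1 \<or> A (-1) then Some ` {j. (j = 1 \<or> j = -1) \<and> A j} else {None})
    else if a = int l1 \<and> b = int l2 then (if v = 0 then {None} else if A v then {Some v} else {None})
    else if A (tt v (a = int l1) (b = int l2)) then {Some (tt v (a = int l1) (b = int l2))} else {None})"

lemma tt_eq_v: "DS v a b \<Longrightarrow> tt v (a = int l1) (b = int l2) = v \<Longrightarrow> v \<noteq> 0"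
  by (auto simp: tt_def split: if_splits)

lemma dfs_acts_DS:
  assumes "DS (pos h) a b" "traversed h = TS a b"
  shows "dfs_acts l1 l2 h A = dfs_set (pos h) a b A"
proof -
  have U: "untrav_out l1 l2 h = (if a \<noteq> int l1 \<and> b \<noteq> int l2 \<and> pos h = 0 then {1, -1}
     else if a = int l1 \<and> b = int l2 then {}
     else if tt (pos h) (a = int l1) (b = int l2) = pos h then {} else {tt (pos h) (a = int l1) (b = int l2)})"
    unfolding untrav_out_def assms(2) by (rule U_DS[OF assms(1)])
  have ne: "tt (pos h) (a = int l1) (b = int l2) = pos h \<Longrightarrow> pos h \<noteq> 0" by (rule tt_eq_v[OF assms(1)])
  have s: "{j \<in> {1, -1::int}. A j} = {j. (j = 1 \<or> j = -1) \<and> A j}" by auto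
  consider (R) "a \<noteq> int l1 \<and> b \<noteq> int l2 \<and> pos h = 0" | (B) "a = int l1 \<and> b = int l2"
    | (V) "\<not> (a \<noteq> int l1 \<and> b \<noteq> int l2 \<and> pos h = 0)" "\<not> (a = int l1 \<and> b = int l2)"
          "tt (pos h) (a = int l1) (b = int l2) = pos h"
    | (F) "\<not> (a \<noteq> int l1 \<and> b \<noteq> int l2 \<and> pos h = 0)" "\<not> (a = int l1 \<and> b = int l2)"
          "tt (pos h) (a = int l1) (b = int l2) \<noteq> pos h" by blast
  thus ?thesis
  proof cases
    case R
    have "untrav_out l1 l2 h = {1, -1}" using R U by simp
    moreover have "dfs_set (pos h) a b A = (if A 1 \<or> A (-1) then Some ` {j. (j = 1 \<or> j = -1) \<and> A j} else {None})"
      using R by (simp add: dfs_set_def)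
    moreover have "({j \<in> {1, -1::int}. A j} \<noteq> {}) = (A 1 \<or> A (-1))" by auto
    ultimately show ?thesis unfolding dfs_acts_def Let_def s by simp
  next
    case B
    have "untrav_out l1 l2 h = {}" using B U by simp
    moreover have "dfs_set (pos h) a b A = (if pos h = 0 then {None} else if A (pos h) then {Some (pos h)} else {None})"
      using B by (simp add: dfs_set_def)
    ultimately show ?thesis unfolding dfs_acts_def Let_def by simp
  next
    case V
    have c1: "(a \<noteq> int l1 \<and> b \<noteq> int l2 \<and> pos h = 0) = False" "(a = int l1 \<and> b = int l2) = False"
      using V by blast+
    have "untrav_out l1 l2 h = {}" unfolding U c1 if_False using V(3) by simp
    moreover have "dfs_set (pos h) a b A = (if A (pos h) then {Some (pos h)} else {None})"
      unfolding dfs_set_def c1 if_False V(3) ..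
    moreover have "pos h \<noteq> 0" using ne V(3) by blast
    ultimately show ?thesis unfolding dfs_acts_def Let_def by simp
  next
    case F
    have c1: "(a \<noteq> int l1 \<and> b \<noteq> int l2 \<and> pos h = 0) = False" "(a = int l1 \<and> b = int l2) = False"
      using F by blast+
    have "untrav_out l1 l2 h = {tt (pos h) (a = int l1) (b = int l2)}" unfolding U c1 if_False using F(3) by simp
    moreover have "dfs_set (pos h) a b A = (if A (tt (pos h) (a = int l1) (b = int l2)) then {Some (tt (pos h) (a = int l1) (b = int l2))} else {None})"
      unfolding dfs_set_def c1 if_False ..
    ultimately show ?thesis unfolding dfs_acts_def Let_def by auto
  qed
qed

lemma DS_step:
  assumes "DS v a b" "x \<in> dfs_set v a b A"
  shows "\<exists>a' b'. TS a b \<union> (case x of None \<Rightarrow> {} | Some j \<Rightarrow> {j}) = TS a' b' \<and> DS (step v x) a' b'"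
proof (cases x)
  case None thus ?thesis using assms by (auto simp: step_def)
next
  case (Some j)
  note x = Some
  consider (R) "a \<noteq> int l1" "b \<noteq> int l2" "v = 0" | (B) "a = int l1" "b = int l2"
    | (T) "\<not> (a \<noteq> int l1 \<and> b \<noteq> int l2 \<and> v = 0)" "\<not> (a = int l1 \<and> b = int l2)" by blast
  thus ?thesis
  proof cases
    case R
    hence ab: "a = 0" "b = 0" using assms(1) by (auto simp: DS_def)
    have "j = 1 \<or> j = -1" using assms(2) R x by (auto simp: dfs_set_def split: if_splits)
    thus ?thesis
    proof
      assume j: "j = 1"
      show ?thesis
        by (rule exI[of _ 1], rule exI[of _ 0]) (use j ab x R l1 l2 in \<open>auto simp: TS_def DS_def step_def near_def\<close>)
    next
      assume j: "j = -1"
      show ?thesis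
        by (rule exI[of _ 0], rule exI[of _ 1]) (use j ab x R l1 l2 in \<open>auto simp: TS_def DS_def step_def near_def\<close>)
    qed
  next
    case B
    hence j: "j = v" "v \<noteq> 0" using assms(2) x by (auto simp: dfs_set_def split: if_splits)
    show ?thesis
      by (rule exI[of _ a], rule exI[of _ b]) (use j B assms(1) x l1 l2 in \<open>auto simp: TS_def DS_def step_def near_def\<close>)
  next
    case T
    hence j: "j = tt v (a = int l1) (b = int l2)" using assms(2) x by (auto simp: dfs_set_def split: if_splits)
    show ?thesis using assms(1)
    proof (cases rule: DS_cases)
      case pos
      show ?thesis
      proof (cases "a = int l1")
        case True
        hence "j = v" using j pos by (simp add: tt_def)
        thus ?thesis
          by (intro exI[of _ a] exI[of _ b]) (use True pos x in \<open>auto simp: TS_def DS_def step_def near_def\<close>)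
      next
        case False
        hence "j = v + 1" "v = a" using j pos by (auto simp: tt_def)
        thus ?thesis
          by (intro exI[of _ "a+1"] exI[of _ b]) (use False pos x in \<open>auto simp: TS_def DS_def step_def near_def\<close>)
      qed
    next
      case neg
      show ?thesis
      proof (cases "b = int l2")
        case True
        hence "j = v" using j neg T by (auto simp: tt_def)
        thus ?thesis
          by (intro exI[of _ a] exI[of _ b]) (use True neg x in \<open>auto simp: TS_def DS_def step_def near_def\<close>)
      next
        case False
        hence "j = v - 1" "- v = b" using j neg by (auto simp: tt_def)
        thus ?thesis
          by (intro exI[of _ a] exI[of _ "b+1"]) (use False neg x in \<open>auto simp: TS_def DS_def step_def near_def\<close>)
      qed
    next
      case zero
      consider "a = int l1" "b = 0" | "a = 0" "b = int l2" using zero T by auto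
      thus ?thesis
      proof cases
        case 1
        hence "j = -1" using j zero by (simp add: tt_def)
        thus ?thesis
          by (intro exI[of _ a] exI[of _ 1]) (use 1 zero x l1 l2 in \<open>auto simp: TS_def DS_def step_def near_def\<close>)
      next
        case 2
        hence "j = 1" using j zero T by (auto simp: tt_def)
        thus ?thesis
          by (intro exI[of _ 1] exI[of _ b]) (use 2 zero x l1 l2 in \<open>auto simp: TS_def DS_def step_def near_def\<close>)
      qed
    qed
  qed
qed

end



context G begin

lemma Wn_root: assumes "j = 1 \<or> j = -1" shows "Wn 0 False False (Some j) = (L-1)/p"
proof -
  have R: "RInv 0 False False" by (rule RInv0)
  have j: "j \<in> edges l1 l2" "0 = j \<or> 0 = near j" using assms l1 l2 by (auto simp: mem_edges near_def)
  have "step 0 (Some j) = j" using assms by (auto simp: step_def)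
  thus ?thesis using Wn_move[OF R j] Wff[of j] assms l1 l2 by auto
qed

lemma ub_step:
  assumes "DS v a b" "x \<in> dfs_set v a b A"
  shows "Wn v (a = int l1) (b = int l2) x \<le> Gr v (a = int l1) (b = int l2) A"
proof -
  consider (R) "a \<noteq> int l1" "b \<noteq> int l2" "v = 0" | (B) "a = int l1" "b = int l2"
    | (T) "\<not> (a \<noteq> int l1 \<and> b \<noteq> int l2 \<and> v = 0)" "\<not> (a = int l1 \<and> b = int l2)" by blast
  thus ?thesis
  proof cases
    case R
    show ?thesis
    proof (cases "A 1 \<or> A (-1)")
      case True
      then obtain j where "x = Some j" "j = 1 \<or> j = -1" using assms(2) R by (auto simp: dfs_set_def)
      thus ?thesis using Wn_root True R by (simp add: Gr_def)
    next
      case False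
      hence "x = None" using assms(2) R by (auto simp: dfs_set_def)
      thus ?thesis using False R by (simp add: Gr_def Wn_def Wr_def step_def)
    qed
  next
    case B thus ?thesis by (simp add: Gr_def Wn_def Wr_def)
  next
    case T
    have c1: "(a \<noteq> int l1 \<and> b \<noteq> int l2 \<and> v = 0) = False" "(a = int l1 \<and> b = int l2) = False"
      using T by blast+
    have g: "Gr v (a = int l1) (b = int l2) A = (if A (tt v (a = int l1) (b = int l2))
       then Wn v (a = int l1) (b = int l2) (Some (tt v (a = int l1) (b = int l2))) else Wr v (a = int l1) (b = int l2))"
      using T unfolding Gr_def by auto
    have "x \<in> (if A (tt v (a = int l1) (b = int l2)) then {Some (tt v (a = int l1) (b = int l2))} else {None})"
      using assms(2) unfolding dfs_set_def c1 if_False .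
    thus ?thesis unfolding g by (auto simp: Wn_def step_def split: if_splits)
  qed
qed

lemma TS00: "TS 0 0 = {}" by (auto simp: TS_def)

lemma dfs_inv:
  assumes "is_dfs l1 l2 p \<sigma>" "reachable l1 l2 p \<sigma> h"
  shows "\<exists>a b. traversed h = TS a b \<and> DS (pos h) a b"
  using assms(2)
proof (rule reachable_induct)
  show "\<exists>a b. traversed [] = TS a b \<and> DS (pos []) a b"
    by (rule exI[of _ 0], rule exI[of _ 0]) (simp add: TS00 DS_def)
next
  fix h A x
  assume r: "reachable l1 l2 p \<sigma> h" "\<exists>a b. traversed h = TS a b \<and> DS (pos h) a b"
    "A \<in> set_pmf (act l1 l2 p)" "x \<in> set_pmf (\<sigma> h A)"
  then obtain a b where ab: "traversed h = TS a b" "DS (pos h) a b" by blast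
  have "x \<in> dfs_acts l1 l2 h A" using assms(1) r unfolding is_dfs_def by blast
  hence "x \<in> dfs_set (pos h) a b A" using dfs_acts_DS[OF ab(2,1)] by simp
  from DS_step[OF ab(2) this] obtain a' b' where
    "TS a b \<union> (case x of None \<Rightarrow> {} | Some j \<Rightarrow> {j}) = TS a' b'" "DS (step (pos h) x) a' b'" by blast
  thus "\<exists>a b. traversed (h @ [(A, x)]) = TS a b \<and> DS (pos (h @ [(A, x)])) a b"
    using ab by auto
qed

lemma ub_hist:
  assumes "is_dfs l1 l2 p \<sigma>" "reachable l1 l2 p \<sigma> h"
  shows "ch h + (\<integral>\<^sup>+A. (\<integral>\<^sup>+x. Wh (h @ [(A,x)]) \<partial>\<sigma> h A) \<partial>act l1 l2 p) \<le> Wh h"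
proof -
  obtain a b where ab: "traversed h = TS a b" "DS (pos h) a b" using dfs_inv[OF assms] by blast
  have f: "fl1 h = (a = int l1)" "fl2 h = (b = int l2)" using DS_flags[OF ab(2)] ab(1) by (auto simp: fl1_def fl2_def)
  let ?v = "pos h" and ?f1 = "fl1 h" and ?f2 = "fl2 h"
  have R: "RInv ?v ?f1 ?f2" using DS_RInv[OF ab(2)] f by simp
  have "(\<integral>\<^sup>+A. (\<integral>\<^sup>+x. Wh (h @ [(A,x)]) \<partial>\<sigma> h A) \<partial>act l1 l2 p) \<le> (\<integral>\<^sup>+A. ennreal (Gr ?v ?f1 ?f2 A) \<partial>act l1 l2 p)"
  proof (rule nn_integral_mono_AE, rule AE_pmfI)
    fix A assume A: "A \<in> set_pmf (act l1 l2 p)"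
    have "(\<integral>\<^sup>+x. Wh (h @ [(A,x)]) \<partial>\<sigma> h A) \<le> (\<integral>\<^sup>+x. ennreal (Gr ?v ?f1 ?f2 A) \<partial>\<sigma> h A)"
    proof (rule nn_integral_mono_AE, rule AE_pmfI)
      fix x assume "x \<in> set_pmf (\<sigma> h A)"
      hence "x \<in> dfs_acts l1 l2 h A" using assms A unfolding is_dfs_def by blast
      hence "x \<in> dfs_set ?v a b A" using dfs_acts_DS[OF ab(2,1)] by simp
      hence "Wn ?v ?f1 ?f2 x \<le> Gr ?v ?f1 ?f2 A" using ub_step[OF ab(2)] f by simp
      thus "Wh (h @ [(A, x)]) \<le> ennreal (Gr ?v ?f1 ?f2 A)" by (simp add: Wh_snoc ennreal_leI)
    qed
    also have "\<dots> = ennreal (Gr ?v ?f1 ?f2 A)" by simp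
    finally show "(\<integral>\<^sup>+x. Wh (h @ [(A,x)]) \<partial>\<sigma> h A) \<le> ennreal (Gr ?v ?f1 ?f2 A)" .
  qed
  hence "ch h + (\<integral>\<^sup>+A. (\<integral>\<^sup>+x. Wh (h @ [(A,x)]) \<partial>\<sigma> h A) \<partial>act l1 l2 p) \<le>
     ch h + (\<integral>\<^sup>+A. ennreal (Gr ?v ?f1 ?f2 A) \<partial>act l1 l2 p)" by (rule add_left_mono)
  thus ?thesis using bellman[OF R] by (simp add: ch_def Wh_def)
qed

theorem upper_bound:
  assumes "is_dfs l1 l2 p \<sigma>"
  shows "payoff_eps l1 l2 p \<sigma> \<le> ennreal Vs"
proof -
  let ?M = "hist_pmf l1 l2 p \<sigma>"
  have W0: "Wh [] = ennreal Vs" by (simp add: Wh_def Wr_def fl1_def fl2_def)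
  have "(\<Sum>k<n. \<integral>\<^sup>+h. ch h \<partial>?M k) \<le> ennreal Vs" for n
  proof -
    have "(\<Sum>k<n. \<integral>\<^sup>+h. ch h \<partial>?M k) + (\<integral>\<^sup>+h. Wh h \<partial>?M n) \<le> ennreal Vs"
      unfolding W0[symmetric] by (rule UB_generic) (rule ub_hist[OF assms])
    thus ?thesis by (meson add_increasing2 order.trans zero_le le_iff_add)
  qed
  hence "(\<Sum>k. \<integral>\<^sup>+h. ch h \<partial>?M k) \<le> ennreal Vs"
    unfolding suminf_eq_SUP by (rule SUP_least)
  thus ?thesis unfolding payoff_nn .
qed

end



lemma dfs_acts_fin_ne:
  "finite (dfs_acts l1 l2 h A) \<and> dfs_acts l1 l2 h A \<noteq> {}"
proof -
  have "finite (untrav_out l1 l2 h)" by (simp add: untrav_out_def)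
  thus ?thesis by (auto simp: dfs_acts_def Let_def)
qed

lemma uniform_is_dfs: "is_dfs l1 l2 p (uniform_dfs l1 l2)"
  unfolding is_dfs_def uniform_dfs_def using dfs_acts_fin_ne by simp

lemma dfs_legal:
  assumes "A \<in> set_pmf (act l1 l2 p)"
  shows "dfs_acts l1 l2 h A \<subseteq> legal_acts l1 l2 h A"
proof
  fix x assume x: "x \<in> dfs_acts l1 l2 h A"
  have "pos h \<noteq> 0 \<Longrightarrow> A (pos h) \<Longrightarrow> pos h \<in> edges l1 l2" using act_outside[OF assms] by blast
  thus "x \<in> legal_acts l1 l2 h A"
    using x unfolding dfs_acts_def legal_acts_def untrav_out_def Let_def by (auto split: if_splits)
qed

lemma dfs_admissible: "is_dfs l1 l2 p \<sigma> \<Longrightarrow> admissible l1 l2 p \<sigma>"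
  unfolding is_dfs_def admissible_def using dfs_legal by blast

lemma one_plus_ennreal: "0 \<le> E \<Longrightarrow> 1 + E = W \<Longrightarrow> I = ennreal E \<Longrightarrow> (1::ennreal) + I \<le> ennreal W"
proof -
  assume a: "0 \<le> E" "1 + E = W" "I = ennreal E"
  have "ennreal (1 + E) = ennreal 1 + ennreal E" by (rule ennreal_plus) (use a in auto)
  thus ?thesis using a by simp
qed

lemma step_None: "step v None = v" by (simp add: step_def)

context G begin

lemma unif_hist_bound:
  fixes F :: "int \<Rightarrow> int set \<Rightarrow> real" and e :: int and M :: real
  assumes F0: "\<And>v T. e \<in> T \<Longrightarrow> F v T = 0"
    and Fnn: "\<And>v a b. DS v a b \<Longrightarrow> F v (TS a b) \<ge> 0"
    and Fstep: "\<And>v a b. DS v a b \<Longrightarrow> \<not> (a \<noteq> int l1 \<and> b \<noteq> int l2 \<and> v = 0) \<Longrightarrow> e \<notin> TS a b \<Longrightarrow>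
        F (step v (Some (tt v (a = int l1) (b = int l2)))) (insert (tt v (a = int l1) (b = int l2)) (TS a b))
          = F v (TS a b) - 1/p"
    and Fr: "F 1 {1} + F (-1) {-1} = 2 * M" "F 0 {} = 1/(p*(2-p)) + M"
    and eE: "e \<in> edges l1 l2"
  shows "exp_time l1 l2 p (uniform_dfs l1 l2) e \<le> ennreal (F 0 {})"
proof -
  let ?\<sigma> = "uniform_dfs l1 l2"
  define Fh where "Fh h = ennreal (F (pos h) (traversed h))" for h
  define c where "c h = (indicator {h. e \<notin> traversed h} h :: ennreal)" for h
  have p0': "0 \<le> p" using p0 by simp
  have Fallall: "e \<in> TS (int l1) (int l2)" using eE by (auto simp: TS_def mem_edges)
  have step: "c h + (\<integral>\<^sup>+A. (\<integral>\<^sup>+x. Fh (h @ [(A,x)]) \<partial>?\<sigma> h A) \<partial>act l1 l2 p) \<le> Fh h"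
    if r: "reachable l1 l2 p ?\<sigma> h" for h
  proof -
    obtain a b where ab: "traversed h = TS a b" "DS (pos h) a b" using dfs_inv[OF uniform_is_dfs r] by blast
    let ?v = "pos h"
    have sig: "?\<sigma> h A = pmf_of_set (dfs_set ?v a b A)" for A
      unfolding uniform_dfs_def using dfs_acts_DS[OF ab(2,1)] by simp
    have nx: "Fh (h @ [(A,x)]) = ennreal (F (step ?v x) (TS a b \<union> (case x of None \<Rightarrow> {} | Some j \<Rightarrow> {j})))" for A x
      unfolding Fh_def using ab by simp
    show ?thesis
    proof (cases "e \<in> TS a b")
      case True
      have "Fh (h @ [(A,x)]) = 0" for A x unfolding nx using F0 True by simp
      moreover have "c h = 0" using True ab by (simp add: c_def)
      ultimately show ?thesis by simp
    next
      case eT: False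
      have ch: "c h = 1" using eT ab by (simp add: c_def)
      have nb: "\<not> (a = int l1 \<and> b = int l2)" using eT Fallall by auto
      show ?thesis
      proof (cases "a \<noteq> int l1 \<and> b \<noteq> int l2 \<and> ?v = 0")
        case False
        define t where "t = tt ?v (a = int l1) (b = int l2)"
        have R: "RInv ?v (a = int l1) (b = int l2)" by (rule DS_RInv[OF ab(2)])
        have te: "t \<in> edges l1 l2" unfolding t_def by (rule tt_edges(1)[OF R nb]) (use False in auto)
        have c1: "(a \<noteq> int l1 \<and> b \<noteq> int l2 \<and> ?v = 0) = False" "(a = int l1 \<and> b = int l2) = False"
          using False nb by blast+
        have ds: "dfs_set ?v a b A = (if A t then {Some t} else {None})" for A
          unfolding dfs_set_def c1 if_False t_def ..
        have Fst: "F (step ?v (Some t)) (insert t (TS a b)) = F ?v (TS a b) - 1/p"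
          unfolding t_def by (rule Fstep[OF ab(2) False eT])
        have Fnx: "F (step ?v (Some t)) (insert t (TS a b)) \<ge> 0"
        proof -
          have "Some t \<in> dfs_set ?v a b (\<lambda>_. True)" unfolding ds by simp
          from DS_step[OF ab(2) this] obtain a' b' where
            "TS a b \<union> {t} = TS a' b'" "DS (step ?v (Some t)) a' b'" by auto
          thus ?thesis using Fnn by (metis Un_insert_right sup_bot_right)
        qed
        have F1: "F ?v (TS a b) \<ge> 0" using Fnn[OF ab(2)] .
        have inner: "(\<integral>\<^sup>+x. Fh (h @ [(A,x)]) \<partial>?\<sigma> h A) =
           (\<lambda>z. ennreal (if z then F ?v (TS a b) - 1/p else F ?v (TS a b))) (A t)" for A
          unfolding sig ds nx by (cases "A t") (simp_all add: pmf_of_set_singleton Fst step_None)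
        have "(\<integral>\<^sup>+A. (\<integral>\<^sup>+x. Fh (h @ [(A,x)]) \<partial>?\<sigma> h A) \<partial>act l1 l2 p)
            = ennreal ((F ?v (TS a b) - 1/p) * p + F ?v (TS a b) * (1 - p))"
        proof -
          have Fx: "F ?v (TS a b) - 1/p \<ge> 0" using Fnx Fst by simp
          show ?thesis unfolding inner
            apply (subst nn_act_one[OF te p0' p1])
            apply (simp only: if_True if_False mix[OF Fx F1 p0' p1])
            done
        qed
        moreover have "1 + (F ?v (TS a b) - 1/p) * p + F ?v (TS a b) * (1 - p) = F ?v (TS a b)"
          using p0 by (simp add: field_simps)
        moreover have "(F ?v (TS a b) - 1/p) * p + F ?v (TS a b) * (1 - p) \<ge> 0"
          using Fnx Fst F1 p0' p1 by (simp add: mult_nonneg_nonneg)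
        ultimately show ?thesis unfolding ch Fh_def ab(1)
          by (intro one_plus_ennreal) (simp_all add: add.assoc)
      next
        case root: True
        hence ab0: "a = 0" "b = 0" "?v = 0" using ab(2) by (auto simp: DS_def)
        have T0: "TS 0 0 = {}" by (rule TS00)
        have TS10: "TS 1 0 = {1}" and TS01: "TS 0 1 = {-1}" by (auto simp: TS_def)
        define X1 where "X1 = F 1 {1}"
        define X2 where "X2 = F (-1) {-1}"
        define U where "U = F 0 {}"
        have X1: "X1 \<ge> 0" using Fnn[of 1 1 0] l1 l2 unfolding X1_def TS10 by (simp add: DS_def)
        have X2: "X2 \<ge> 0" using Fnn[of "-1" 0 1] l1 l2 unfolding X2_def TS01 by (simp add: DS_def)
        have M: "M \<ge> 0" "X1 + X2 = 2 * M" using X1 X2 Fr(1) unfolding X1_def X2_def by auto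
        have U: "U \<ge> 0" using Fnn[of 0 0 0] unfolding U_def TS00 by (simp add: DS_def)
        have ds: "dfs_set 0 0 0 A = (if A 1 \<or> A (-1) then Some ` {j. (j = 1 \<or> j = -1) \<and> A j} else {None})" for A
          using l1 l2 by (simp add: dfs_set_def)
        have nx0: "Fh (h @ [(A,x)]) = ennreal (F (step 0 x) (case x of None \<Rightarrow> {} | Some j \<Rightarrow> {j}))" for A x
          unfolding nx ab0 TS00 by simp
        have inner: "(\<integral>\<^sup>+x. Fh (h @ [(A,x)]) \<partial>?\<sigma> h A) =
           (\<lambda>y z. ennreal (if y \<and> z then M else if y then X1 else if z then X2 else U)) (A 1) (A (-1))" for A
        proof -
          have e1: "{j. (j = 1 \<or> j = -1) \<and> A j} = (if A 1 then {1} else {}) \<union> (if A (-1) then {-1} else {})"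
            by auto
          show ?thesis
          proof (cases "A 1"; cases "A (-1)")
            assume a: "A 1" "A (-1)"
            hence S: "dfs_set 0 0 0 A = {Some 1, Some (-1)}" unfolding ds e1 by (simp add: insert_commute)
            have "(\<integral>\<^sup>+x. Fh (h @ [(A,x)]) \<partial>?\<sigma> h A) = (ennreal X1 + ennreal X2) / 2"
              unfolding sig ab0 S by (subst nn_integral_pmf_of_set) (auto simp: nx0 step_def near_def X1_def X2_def)
            also have "\<dots> = ennreal (X1 + X2) / ennreal 2" using X1 X2 by (simp add: ennreal_plus)
            also have "\<dots> = ennreal ((X1 + X2) / 2)" by (rule divide_ennreal) (use X1 X2 in auto)
            also have "\<dots> = ennreal M" using M by simp
            finally show ?thesis using a by simp
          next
            assume a: "A 1" "\<not> A (-1)"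
            hence S: "dfs_set 0 0 0 A = {Some 1}" unfolding ds e1 by simp
            show ?thesis unfolding sig ab0 S using a by (simp add: pmf_of_set_singleton nx0 step_def X1_def)
          next
            assume a: "\<not> A 1" "A (-1)"
            hence S: "dfs_set 0 0 0 A = {Some (-1)}" unfolding ds e1 by simp
            show ?thesis unfolding sig ab0 S using a by (simp add: pmf_of_set_singleton nx0 step_def near_def X2_def)
          next
            assume a: "\<not> A 1" "\<not> A (-1)"
            hence S: "dfs_set 0 0 0 A = {None}" unfolding ds by simp
            show ?thesis unfolding sig ab0 S using a by (simp add: pmf_of_set_singleton nx0 step_def U_def)
          qed
        qed
        have e: "(1::int) \<in> edges l1 l2" "(-1::int) \<in> edges l1 l2" using l1 l2 by (auto simp: mem_edges)
        have q1: "0 \<le> 1 - p" using p1 by simp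
        have n1: "M * p + X1 * (1-p) \<ge> 0" "X2 * p + U * (1-p) \<ge> 0"
          using M X1 X2 U p0' q1 by (simp_all add: add_nonneg_nonneg mult_nonneg_nonneg)
        have n2: "(M * p + X1 * (1-p)) * p + (X2 * p + U * (1-p)) * (1-p) \<ge> 0"
          using n1 p0' q1 by (simp add: add_nonneg_nonneg mult_nonneg_nonneg)
        have I: "(\<integral>\<^sup>+A. (\<integral>\<^sup>+x. Fh (h @ [(A,x)]) \<partial>?\<sigma> h A) \<partial>act l1 l2 p)
            = ennreal ((M * p + X1 * (1-p)) * p + (X2 * p + U * (1-p)) * (1-p))"
          unfolding inner
          apply (subst nn_act_two[OF e _ p0' p1], simp)
          apply (simp only: if_True if_False simp_thms)
          apply (simp only: mix[OF M(1) X1 p0' p1] mix[OF X2 U p0' p1] mix[OF n1 p0' p1])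
          done
        have idU: "1 + ((M * p + X1 * (1-p)) * p + (X2 * p + U * (1-p)) * (1-p)) = U"
        proof -
          have X2e: "X2 = 2 * M - X1" using M by simp
          show ?thesis unfolding X2e U_def Fr(2) using p0 p1 by (simp add: field_simps)
        qed
        have Fhh: "Fh h = ennreal U" unfolding Fh_def U_def ab ab0 TS00 ..
        show ?thesis unfolding ch Fhh by (rule one_plus_ennreal[OF n2 idU I])
      qed
    qed
  qed
  have W0: "Fh [] = ennreal (F 0 {})" by (simp add: Fh_def)
  have "(\<Sum>k<n. \<integral>\<^sup>+h. c h \<partial>hist_pmf l1 l2 p ?\<sigma> k) \<le> ennreal (F 0 {})" for n
  proof -
    have "(\<Sum>k<n. \<integral>\<^sup>+h. c h \<partial>hist_pmf l1 l2 p ?\<sigma> k) + (\<integral>\<^sup>+h. Fh h \<partial>hist_pmf l1 l2 p ?\<sigma> n) \<le> ennreal (F 0 {})"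
      unfolding W0[symmetric] by (rule UB_generic) (rule step)
    thus ?thesis by (meson add_increasing2 order.trans zero_le le_iff_add)
  qed
  hence "(\<Sum>k. \<integral>\<^sup>+h. c h \<partial>hist_pmf l1 l2 p ?\<sigma> k) \<le> ennreal (F 0 {})"
    unfolding suminf_eq_SUP by (rule SUP_least)
  thus ?thesis unfolding exp_time_nn c_def .
qed

end



context G begin

definition UPm :: "int \<Rightarrow> int \<Rightarrow> int set \<Rightarrow> real" where
 "UPm k v T = (if k \<in> T then 0 else if v = 0 \<and> -1 \<notin> T then 1/(p*(2-p)) + (real_of_int k - 1 + real l2)/p
    else if v < 0 \<and> - int l2 \<notin> T then (2 * real l2 + real_of_int v + real_of_int k)/p
    else (real_of_int k - real_of_int v)/p)"

lemma TS_mem: "j \<in> TS a b \<longleftrightarrow> (1 \<le> j \<and> j \<le> a) \<or> (- b \<le> j \<and> j \<le> -1)"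
  by (simp add: TS_def)

lemma exp_pos:
  assumes k: "1 \<le> k" "k \<le> int l1"
  shows "exp_time l1 l2 p (uniform_dfs l1 l2) k \<le> ennreal Vs"
proof -
  define M where "M = (real_of_int k - 1 + real l2)/p"
  have ke: "k \<in> edges l1 l2" using k by (simp add: mem_edges)
  have "exp_time l1 l2 p (uniform_dfs l1 l2) k \<le> ennreal (UPm k 0 {})"
  proof (rule unif_hist_bound[where M = M, OF _ _ _ _ _ ke])
    show "\<And>v T. k \<in> T \<Longrightarrow> UPm k v T = 0" by (simp add: UPm_def)
  next
    fix v a b assume ds: "DS v a b"
    show "0 \<le> UPm k v (TS a b)"
    proof (cases "k \<in> TS a b")
      case True thus ?thesis by (simp add: UPm_def)
    next
      case False
      hence ka: "a < k" using k by (auto simp: TS_mem)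
      have Ur: "0 \<le> 1/(p*(2-p)) + (real_of_int k - 1 + real l2)/p" using k p0 p1 by simp
      have "- int l2 \<le> v" using ds by (auto simp: DS_def)
      hence 1: "0 \<le> (2 * real l2 + real_of_int v + real_of_int k)/p" using k p0 by simp
      have "v \<le> a" using ds by (auto simp: DS_def)
      hence 2: "0 \<le> (real_of_int k - real_of_int v)/p" using ka p0 by simp
      show ?thesis using False Ur 1 2 unfolding UPm_def by auto
    qed
  next
    fix v a b assume ds: "DS v a b" and nr: "\<not> (a \<noteq> int l1 \<and> b \<noteq> int l2 \<and> v = 0)" and kT: "k \<notin> TS a b"
    have ka: "a < k" using kT k by (auto simp: TS_mem)
    hence an: "a \<noteq> int l1" using k by auto
    let ?t = "tt v (a = int l1) (b = int l2)"
    show "UPm k (step v (Some ?t)) (insert ?t (TS a b)) = UPm k v (TS a b) - 1/p"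
      using ds
    proof (cases rule: DS_cases)
      case pos
      hence va: "v = a" using an by auto
      have t: "?t = v + 1" using an pos by (simp add: tt_def)
      have st: "step v (Some (v+1)) = v + 1" by (simp add: step_def)
      have old: "UPm k v (TS a b) = (real_of_int k - real_of_int v)/p" using kT pos by (simp add: UPm_def)
      show ?thesis
      proof (cases "k = v + 1")
        case True thus ?thesis unfolding t st old using p0 by (simp add: UPm_def)
      next
        case False
        hence "k \<notin> insert (v+1) (TS a b)" using kT by simp
        thus ?thesis unfolding t st old using pos p0 by (simp add: UPm_def field_simps)
      qed
    next
      case neg
      show ?thesis
      proof (cases "b = int l2")
        case True
        have t: "?t = v" using an neg True by (simp add: tt_def)
        have st: "step v (Some v) = v + 1" using neg by (simp add: step_def near_def)
        have vT: "v \<in> TS a b" using neg by (simp add: TS_mem)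
        have m: "- int l2 \<in> TS a b" "-1 \<in> TS a b" using True l2 by (auto simp: TS_mem)
        have old: "UPm k v (TS a b) = (real_of_int k - real_of_int v)/p" using kT neg m by (simp add: UPm_def)
        show ?thesis unfolding t st old using kT vT m neg p0
          by (auto simp: UPm_def insert_absorb field_simps)
      next
        case False
        hence vb: "- v = b" using neg by auto
        have t: "?t = v - 1" using an neg False by (simp add: tt_def)
        have st: "step v (Some (v - 1)) = v - 1" using neg by (simp add: step_def near_def)
        have m: "- int l2 \<notin> TS a b" using False neg by (auto simp: TS_mem)
        have old: "UPm k v (TS a b) = (2 * real l2 + real_of_int v + real_of_int k)/p" using kT neg m by (simp add: UPm_def)
        have kn: "k \<notin> insert (v - 1) (TS a b)" using kT neg k by simp
        show ?thesis
        proof (cases "v - 1 = - int l2")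
          case True
          hence rv: "real_of_int v = 1 - real l2" by linarith
          have "UPm k (v - 1) (insert (v - 1) (TS a b)) = (real_of_int k - real_of_int (v - 1)) / p"
            using kn True neg by (simp add: UPm_def)
          thus ?thesis unfolding t st old using p0 by (simp add: rv field_simps)
        next
          case False
          thus ?thesis unfolding t st old using kn m p0 neg by (simp add: UPm_def field_simps)
        qed
      qed
    next
      case zero
      have a0: "a = 0" using zero an by auto
      have b2: "b = int l2" using zero nr an by auto
      have t: "?t = 1" using a0 b2 zero l1 by (simp add: tt_def)
      have st: "step 0 (Some 1) = 1" by (simp add: step_def)
      have m: "-1 \<in> TS a b" using b2 l2 by (simp add: TS_mem)
      have old: "UPm k v (TS a b) = real_of_int k / p" using kT zero m by (simp add: UPm_def)
      show ?thesis
      proof (cases "k = 1")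
        case True thus ?thesis unfolding t old unfolding zero(1) st using p0 by (simp add: UPm_def)
      next
        case False
        hence "k \<notin> insert 1 (TS a b)" using kT by simp
        thus ?thesis unfolding t old unfolding zero(1) st using p0 by (simp add: UPm_def field_simps)
      qed
    qed
  next
    have a: "UPm k 1 {1} = (real_of_int k - 1)/p" by (simp add: UPm_def)
    have b: "UPm k (-1) {-1} = (2 * real l2 - 1 + real_of_int k)/p"
      unfolding UPm_def using k by (cases "l2 = 1") auto
    show "UPm k 1 {1} + UPm k (-1) {-1} = 2 * M" unfolding a b M_def using p0 by (simp add: field_simps)
  next
    show "UPm k 0 {} = 1 / (p * (2 - p)) + M" by (simp add: UPm_def M_def)
  qed
  also have "UPm k 0 {} \<le> Vs" using k p0 unfolding UPm_def Vs_def L_eq by (simp add: divide_right_mono)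
  finally show ?thesis by (simp add: ennreal_leI)
qed

definition UNm :: "int \<Rightarrow> int \<Rightarrow> int set \<Rightarrow> real" where
 "UNm k v T = (if -k \<in> T then 0 else if v = 0 \<and> 1 \<notin> T then 1/(p*(2-p)) + (real_of_int k - 1 + real l1)/p
    else if v > 0 \<and> int l1 \<notin> T then (2 * real l1 - real_of_int v + real_of_int k)/p
    else (real_of_int k + real_of_int v)/p)"

lemma exp_neg:
  assumes k: "1 \<le> k" "k \<le> int l2"
  shows "exp_time l1 l2 p (uniform_dfs l1 l2) (-k) \<le> ennreal Vs"
proof -
  define M where "M = (real_of_int k - 1 + real l1)/p"
  have ke: "-k \<in> edges l1 l2" using k by (simp add: mem_edges)
  have "exp_time l1 l2 p (uniform_dfs l1 l2) (-k) \<le> ennreal (UNm k 0 {})"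
  proof (rule unif_hist_bound[where M = M, OF _ _ _ _ _ ke])
    show "\<And>v T. -k \<in> T \<Longrightarrow> UNm k v T = 0" by (simp add: UNm_def)
  next
    fix v a b assume ds: "DS v a b"
    show "0 \<le> UNm k v (TS a b)"
    proof (cases "-k \<in> TS a b")
      case True thus ?thesis by (simp add: UNm_def)
    next
      case False
      hence kb: "b < k" using k by (auto simp: TS_mem)
      have Ur: "0 \<le> 1/(p*(2-p)) + (real_of_int k - 1 + real l1)/p" using k p0 p1 by simp
      have "v \<le> int l1" using ds by (auto simp: DS_def)
      hence 1: "0 \<le> (2 * real l1 - real_of_int v + real_of_int k)/p" using k p0 by simp
      have "- v \<le> b" using ds by (auto simp: DS_def)
      hence 2: "0 \<le> (real_of_int k + real_of_int v)/p" using kb p0 by simp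
      show ?thesis using False Ur 1 2 unfolding UNm_def by auto
    qed
  next
    fix v a b assume ds: "DS v a b" and nr: "\<not> (a \<noteq> int l1 \<and> b \<noteq> int l2 \<and> v = 0)" and kT: "-k \<notin> TS a b"
    have kb: "b < k" using kT k by (auto simp: TS_mem)
    hence bn: "b \<noteq> int l2" using k by auto
    let ?t = "tt v (a = int l1) (b = int l2)"
    show "UNm k (step v (Some ?t)) (insert ?t (TS a b)) = UNm k v (TS a b) - 1/p"
      using ds
    proof (cases rule: DS_cases)
      case neg
      hence vb: "- v = b" using bn by auto
      have t: "?t = v - 1" using bn neg by (simp add: tt_def)
      have st: "step v (Some (v - 1)) = v - 1" using neg by (simp add: step_def near_def)
      have old: "UNm k v (TS a b) = (real_of_int k + real_of_int v)/p" using kT neg by (simp add: UNm_def)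
      show ?thesis
      proof (cases "-k = v - 1")
        case True
        hence rv: "real_of_int v = 1 - real_of_int k" by linarith
        show ?thesis unfolding t st old using True p0 by (simp add: UNm_def rv)
      next
        case False
        hence "-k \<notin> insert (v - 1) (TS a b)" using kT by simp
        thus ?thesis unfolding t st old using neg p0 by (simp add: UNm_def field_simps)
      qed
    next
      case pos
      show ?thesis
      proof (cases "a = int l1")
        case True
        have t: "?t = v" using bn pos True by (simp add: tt_def)
        have st: "step v (Some v) = v - 1" using pos by (simp add: step_def near_def)
        have vT: "v \<in> TS a b" using pos by (simp add: TS_mem)
        have m: "int l1 \<in> TS a b" "1 \<in> TS a b" using True l1 by (auto simp: TS_mem)
        have old: "UNm k v (TS a b) = (real_of_int k + real_of_int v)/p" using kT pos m by (simp add: UNm_def)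
        show ?thesis unfolding t st old using kT vT m pos p0
          by (auto simp: UNm_def insert_absorb field_simps)
      next
        case False
        hence va: "v = a" using pos by auto
        have t: "?t = v + 1" using bn pos False by (simp add: tt_def)
        have st: "step v (Some (v + 1)) = v + 1" by (simp add: step_def)
        have m: "int l1 \<notin> TS a b" using False pos by (auto simp: TS_mem)
        have old: "UNm k v (TS a b) = (2 * real l1 - real_of_int v + real_of_int k)/p" using kT pos m by (simp add: UNm_def)
        have kn: "-k \<notin> insert (v + 1) (TS a b)" using kT pos k by simp
        show ?thesis
        proof (cases "v + 1 = int l1")
          case True
          hence rv: "real_of_int v = real l1 - 1" by linarith
          have "UNm k (v + 1) (insert (v + 1) (TS a b)) = (real_of_int k + real_of_int (v + 1)) / p"
            using kn True pos by (simp add: UNm_def)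
          thus ?thesis unfolding t st old using p0 by (simp add: rv field_simps)
        next
          case False
          thus ?thesis unfolding t st old using kn m p0 pos by (simp add: UNm_def field_simps)
        qed
      qed
    next
      case zero
      have b0: "b = 0" using zero bn by auto
      have a1: "a = int l1" using zero nr bn by auto
      have t: "?t = -1" using a1 b0 zero l2 by (simp add: tt_def)
      have st: "step 0 (Some (-1)) = -1" by (simp add: step_def)
      have m: "1 \<in> TS a b" using a1 l1 by (simp add: TS_mem)
      have old: "UNm k v (TS a b) = real_of_int k / p" using kT zero m by (simp add: UNm_def)
      show ?thesis
      proof (cases "k = 1")
        case True thus ?thesis unfolding t old unfolding zero(1) st using p0 by (simp add: UNm_def)
      next
        case False
        hence "-k \<notin> insert (-1) (TS a b)" using kT by simp
        thus ?thesis unfolding t old unfolding zero(1) st using p0 m by (simp add: UNm_def field_simps)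
      qed
    qed
  next
    have a: "UNm k (-1) {-1} = (real_of_int k - 1)/p" by (simp add: UNm_def)
    have b: "UNm k 1 {1} = (2 * real l1 - 1 + real_of_int k)/p"
      unfolding UNm_def using k by (cases "l1 = 1") auto
    show "UNm k 1 {1} + UNm k (-1) {-1} = 2 * M" unfolding a b M_def using p0 by (simp add: field_simps)
  next
    show "UNm k 0 {} = 1 / (p * (2 - p)) + M" by (simp add: UNm_def M_def)
  qed
  also have "UNm k 0 {} \<le> Vs" using k p0 unfolding UNm_def Vs_def L_eq by (simp add: divide_right_mono)
  finally show ?thesis by (simp add: ennreal_leI)
qed

end

theorem mainTheorem11:
  fixes l1 l2 :: nat and p :: real
  assumes "l1 \<ge> 1" and "l2 \<ge> 1" and "0 < p" and "p \<le> 1"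
  shows "(\<forall>\<sigma> \<tau>. is_dfs l1 l2 p \<sigma> \<longrightarrow> admissible l1 l2 p \<tau> \<longrightarrow>
            payoff_eps l1 l2 p \<sigma> \<le> payoff_eps l1 l2 p \<tau>)
       \<and> is_dfs l1 l2 p (uniform_dfs l1 l2)
       \<and> (\<forall>e \<in> edges l1 l2. exp_time l1 l2 p (uniform_dfs l1 l2) e
                              \<le> payoff_eps l1 l2 p (uniform_dfs l1 l2))
       \<and> (\<forall>\<tau>. admissible l1 l2 p \<tau> \<longrightarrow>
              payoff_eps l1 l2 p (uniform_dfs l1 l2) \<le> payoff_eps l1 l2 p \<tau>)"
proof -
  interpret G l1 l2 p by unfold_locales (use assms in auto)
  have U: "is_dfs l1 l2 p (uniform_dfs l1 l2)" by (rule uniform_is_dfs)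
  have lbU: "ennreal Vs \<le> payoff_eps l1 l2 p (uniform_dfs l1 l2)"
    by (rule lower_bound[OF dfs_admissible[OF U]])
  have P1: "\<forall>\<sigma> \<tau>. is_dfs l1 l2 p \<sigma> \<longrightarrow> admissible l1 l2 p \<tau> \<longrightarrow>
            payoff_eps l1 l2 p \<sigma> \<le> payoff_eps l1 l2 p \<tau>"
    using upper_bound lower_bound order.trans by blast
  have P3: "\<forall>e \<in> edges l1 l2. exp_time l1 l2 p (uniform_dfs l1 l2) e
                              \<le> payoff_eps l1 l2 p (uniform_dfs l1 l2)"
  proof
    fix e assume e: "e \<in> edges l1 l2"
    have "exp_time l1 l2 p (uniform_dfs l1 l2) e \<le> ennreal Vs"
    proof (cases "e > 0")
      case True
      thus ?thesis using exp_pos[of e] e by (auto simp: mem_edges)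
    next
      case False
      hence "e = - (- e)" "1 \<le> - e" "- e \<le> int l2" using e by (auto simp: mem_edges)
      thus ?thesis using exp_neg[of "- e"] by simp
    qed
    thus "exp_time l1 l2 p (uniform_dfs l1 l2) e \<le> payoff_eps l1 l2 p (uniform_dfs l1 l2)"
      using lbU by order
  qed
  have P4: "\<forall>\<tau>. admissible l1 l2 p \<tau> \<longrightarrow>
              payoff_eps l1 l2 p (uniform_dfs l1 l2) \<le> payoff_eps l1 l2 p \<tau>"
    using P1 U by blast
  show ?thesis using P1 U P3 P4 by blast
qed

end
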